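(* Let $\mathbf{X}=\{\mathbf{X}_n\}_{n\ge0}$ be a process in $\mathbb{R}^p$, $p\ge1$, with $E\|\mathbf{X}_n\|^2<\infty$ for all $n$, adapted to a filtration $\{\mathcal{F}_n\}_{n\ge0}$. (i) If (A5), (A7), (A8) hold, then $\lim_n\|\mathbf{X}_n\|$ exists and is finite a.e. (ii) If (A6), (A7), (A8) hold, then $\lim_n\|\mathbf{X}_n\|=0$ a.e.
   Context: $\|\cdot\|$ is the Euclidean norm. Residual vectors: $\boldsymbol{\epsilon}_n=\mathbf{X}_n-E[\mathbf{X}_n\mid\mathcal{F}_{n-1}]$, $n\ge1$, with components $\boldsymbol{\epsilon}_n(t)$, $t\in\{1,\dots,p\}$. (A5) There are constants $\alpha_n\ge0$ with $\sum_n\alpha_n<\infty$ such that a.e., for all $n\ge1$: $\frac{\|E[\mathbf{X}_n\mid\mathcal{F}_{n-1}]\|}{\|\mathbf{X}_{n-1}\|}I\{\|\mathbf{X}_{n-1}\|\ne0\}\le1+\alpha_n$. (A6) There are constants $0<k_n\le1$ with $\sum_n(1-k_n)=\infty$ such that a.e., for all $n\ge1$: $\frac{\|E[\mathbf{X}_n\mid\mathcal{F}_{n-1}]\|}{\|\mathbf{X}_{n-1}\|}I\{\|\mathbf{X}_{n-1}\|\ne0\}\le k_n$. (A7) $\lim_n E[\mathbf{X}_n\mid\mathcal{F}_{n-1}]\,I\{\mathbf{X}_{n-1}=\mathbf{0}\}=\mathbf{0}$ a.e. (A8) There are constants $v_n\ge0$ with $\sum_n v_n<\infty$ such that $\max_{1\le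 t\le p}\mathrm{Var}(\boldsymbol{\epsilon}_n(t)\mid\mathcal{F}_{n-1})\le v_n$ a.e. for all $n\ge1$. *)

theory Defs
  imports "HOL-Probability.Probability"
begin

definition vcond_exp :: "'a measure \<Rightarrow> 'a measure \<Rightarrow> ('a \<Rightarrow> real ^ 'p) \<Rightarrow> 'a \<Rightarrow> real ^ 'p" where
  "vcond_exp M F Y = (\<lambda>\<omega>. \<chi> t. real_cond_exp M F (\<lambda>x. Y x $ t) \<omega>)"

definition cond_var :: "'a measure \<Rightarrow> 'a measure \<Rightarrow> ('a \<Rightarrow> real) \<Rightarrow> 'a \<Rightarrow> real" where
  "cond_var M F Y = real_cond_exp M F (\<lambda>x. (Y x - real_cond_exp M F Y x)\<^sup>2)"

definition resid :: "'a measure \<Rightarrow> (nat \<Rightarrow> 'a measure) \<Rightarrow> (nat \<Rightarrow> 'a \<Rightarrow> real ^ 'p) \<Rightarrow> nat \<Rightarrow> 'a \<Rightarrow> real ^ 'p" where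
  "resid M F X n = (\<lambda>\<omega>. X n \<omega> - vcond_exp M (F (n - 1)) (X n) \<omega>)"

definition A5 :: "'a measure \<Rightarrow> (nat \<Rightarrow> 'a measure) \<Rightarrow> (nat \<Rightarrow> 'a \<Rightarrow> real ^ 'p) \<Rightarrow> bool" where
  "A5 M F X \<longleftrightarrow> (\<exists>\<alpha>::nat \<Rightarrow> real. (\<forall>n. \<alpha> n \<ge> 0) \<and> summable \<alpha> \<and>
     (AE \<omega> in M. \<forall>n\<ge>1. X (n - 1) \<omega> \<noteq> 0 \<longrightarrow>
        norm (vcond_exp M (F (n - 1)) (X n) \<omega>) / norm (X (n - 1) \<omega>) \<le> 1 + \<alpha> n))"

definition A6 :: "'a measure \<Rightarrow> (nat \<Rightarrow> 'a measure) \<Rightarrow> (nat \<Rightarrow> 'a \<Rightarrow> real ^ 'p) \<Rightarrow> bool" where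
  "A6 M F X \<longleftrightarrow> (\<exists>k::nat \<Rightarrow> real. (\<forall>n. 0 < k n \<and> k n \<le> 1) \<and> \<not> summable (\<lambda>n. 1 - k n) \<and>
     (AE \<omega> in M. \<forall>n\<ge>1. X (n - 1) \<omega> \<noteq> 0 \<longrightarrow>
        norm (vcond_exp M (F (n - 1)) (X n) \<omega>) / norm (X (n - 1) \<omega>) \<le> k n))"

definition A7 :: "'a measure \<Rightarrow> (nat \<Rightarrow> 'a measure) \<Rightarrow> (nat \<Rightarrow> 'a \<Rightarrow> real ^ 'p) \<Rightarrow> bool" where
  "A7 M F X \<longleftrightarrow> (AE \<omega> in M.
     (\<lambda>n. if X (n - 1) \<omega> = 0 then vcond_exp M (F (n - 1)) (X n) \<omega> else 0) \<longlonglongrightarrow> 0)"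

definition A8 :: "'a measure \<Rightarrow> (nat \<Rightarrow> 'a measure) \<Rightarrow> (nat \<Rightarrow> 'a \<Rightarrow> real ^ 'p) \<Rightarrow> bool" where
  "A8 M F X \<longleftrightarrow> (\<exists>v::nat \<Rightarrow> real. (\<forall>n. v n \<ge> 0) \<and> summable v \<and>
     (AE \<omega> in M. \<forall>n\<ge>1. \<forall>t. cond_var M (F (n - 1)) (\<lambda>x. resid M F X n x $ t) \<omega> \<le> v n))"

end

theory Submission
  imports Defs
begin

lemma int_sq_add:
  fixes f g :: "'a \<Rightarrow> real"
  assumes "f \<in> borel_measurable M" "g \<in> borel_measurable M"
    "integrable M (\<lambda>x. (f x)\<^sup>2)" "integrable M (\<lambda>x. (g x)\<^sup>2)"
  shows "integrable M (\<lambda>x. (f x + g x)\<^sup>2)"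
proof (rule Bochner_Integration.integrable_bound[of _ "\<lambda>x. 2 * (f x)\<^sup>2 + 2 * (g x)\<^sup>2"])
  show "integrable M (\<lambda>x. 2 * (f x)\<^sup>2 + 2 * (g x)\<^sup>2)" using assms by simp
  show "(\<lambda>x. (f x + g x)\<^sup>2) \<in> borel_measurable M" using assms by simp
  have "(f x + g x)\<^sup>2 \<le> 2 * (f x)\<^sup>2 + 2 * (g x)\<^sup>2" for x
    using zero_le_power2[of "f x - g x"] unfolding power2_diff power2_sum by linarith
  then show "AE x in M. norm ((f x + g x)\<^sup>2) \<le> norm (2 * (f x)\<^sup>2 + 2 * (g x)\<^sup>2)"
    by simp
qed
lemma int_mult_L2:
  fixes f g :: "'a \<Rightarrow> real"
  assumes "f \<in> borel_measurable M" "g \<in> borel_measurable M"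
    "integrable M (\<lambda>x. (f x)\<^sup>2)" "integrable M (\<lambda>x. (g x)\<^sup>2)"
  shows "integrable M (\<lambda>x. f x * g x)"
proof (rule Bochner_Integration.integrable_bound[of _ "\<lambda>x. (f x)\<^sup>2 + (g x)\<^sup>2"])
  show "integrable M (\<lambda>x. (f x)\<^sup>2 + (g x)\<^sup>2)" using assms by auto
  show "(\<lambda>x. f x * g x) \<in> borel_measurable M" using assms by measurable
  have "\<bar>f x * g x\<bar> \<le> (f x)\<^sup>2 + (g x)\<^sup>2" for x
    using zero_le_power2[of "f x - g x"] zero_le_power2[of "f x + g x"] unfolding power2_diff power2_sum abs_le_iff by linarith
  then show "AE x in M. norm (f x * g x) \<le> norm ((f x)\<^sup>2 + (g x)\<^sup>2)"
    by simp
qed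

lemma int_L2:
  fixes f :: "'a \<Rightarrow> real"
  assumes "finite_measure M" "f \<in> borel_measurable M" "integrable M (\<lambda>x. (f x)\<^sup>2)"
  shows "integrable M f"
proof (rule Bochner_Integration.integrable_bound[of _ "\<lambda>x. 1 + (f x)\<^sup>2"])
  interpret finite_measure M by fact
  show "integrable M (\<lambda>x. 1 + (f x)\<^sup>2)" using assms by auto
  show "f \<in> borel_measurable M" by fact
  have "\<bar>f x\<bar> \<le> 1 + (f x)\<^sup>2" for x
    using zero_le_power2[of "\<bar>f x\<bar> - 1"] unfolding power2_diff power2_abs by simp
  then show "AE x in M. norm (f x) \<le> norm (1 + (f x)\<^sup>2)" by simp
qed

lemma cauchy_aux:
  fixes a :: "nat \<Rightarrow> real"
  assumes H: "\<And>q. \<exists>m. \<forall>i\<ge>m. \<bar>\<Sum>k\<in>{m..<i}. a k\<bar> < 1 / real (Suc q)"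
  shows "summable a"
  unfolding summable_Cauchy
proof (intro allI impI)
  fix e :: real assume "e > 0"
  then obtain q0 where q0: "q0 > 0" "inverse (real q0) < e / 2"
    using ex_inverse_of_nat_less[of "e/2"] by auto
  obtain m where m: "\<forall>i\<ge>m. \<bar>\<Sum>k\<in>{m..<i}. a k\<bar> < 1 / real (Suc q0)" using H by blast
  have lt: "1 / real (Suc q0) < e / 2" using q0
    by (smt (verit, ccfv_SIG) frac_le inverse_eq_divide of_nat_0_less_iff of_nat_less_iff lessI)
  show "\<exists>N. \<forall>m'\<ge>N. \<forall>n. norm (sum a {m'..<n}) < e"
  proof (intro exI allI impI)
    fix m' n assume "m \<le> m'"
    show "norm (sum a {m'..<n}) < e"
    proof (cases "m' \<le> n")
      case False then show ?thesis using \<open>e > 0\<close> by simp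
    next
      case True
      have "sum a {m..<m'} + sum a {m'..<n} = sum a {m..<n}"
        by (rule sum.atLeastLessThan_concat) (use True \<open>m \<le> m'\<close> in auto)
      then have "sum a {m'..<n} = sum a {m..<n} - sum a {m..<m'}" by simp
      moreover have "\<bar>sum a {m..<n}\<bar> < 1 / real (Suc q0)" using m True \<open>m \<le> m'\<close> by auto
      moreover have "\<bar>sum a {m..<m'}\<bar> < 1 / real (Suc q0)" using m \<open>m \<le> m'\<close> by auto
      ultimately show ?thesis using lt by simp
    qed
  qed
qed

lemma mart_conv:
  fixes \<eta> :: "nat \<Rightarrow> 'a \<Rightarrow> real"
  assumes P: "prob_space M"
    and sub: "\<And>n. subalgebra M (G n)"
    and mono: "\<And>m n. m \<le> n \<Longrightarrow> sets (G m) \<subseteq> sets (G n)"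
    and meas: "\<And>n. \<eta> n \<in> borel_measurable (G (Suc n))"
    and sq: "\<And>n. integrable M (\<lambda>x. (\<eta> n x)\<^sup>2)"
    and orth: "\<And>n Z. Z \<in> borel_measurable (G n) \<Longrightarrow> integrable M (\<lambda>x. (Z x)\<^sup>2) \<Longrightarrow> (\<integral>x. Z x * \<eta> n x \<partial>M) = 0"
    and summ: "summable (\<lambda>n. \<integral>x. (\<eta> n x)\<^sup>2 \<partial>M)"
  shows "AE x in M. summable (\<lambda>n. \<eta> n x)"
proof -
  interpret prob_space M by fact
  have measG: "f \<in> borel_measurable (G n)" if "f \<in> borel_measurable (G m)" "m \<le> n" for f :: "'a \<Rightarrow> real" and m n
    using measurable_mono[of borel borel "G m" "G n"] mono[OF that(2)] sub[of m] sub[of n] that(1)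
    unfolding subalgebra_def by auto
  have measM: "f \<in> borel_measurable M" if "f \<in> borel_measurable (G m)" for f :: "'a \<Rightarrow> real" and m
    using measurable_from_subalg sub that by blast
  have etaM: "\<eta> n \<in> borel_measurable M" for n using measM[OF meas] .
  define D where "D m j x = (\<Sum>k\<in>{m..<j}. \<eta> k x)" for m j x
  have DG: "D m j \<in> borel_measurable (G j)" for m j
    unfolding D_def by (rule borel_measurable_sum) (use measG[OF meas] in auto)
  have DM: "D m j \<in> borel_measurable M" for m j using measM[OF DG] .
  have Dstep: "D m (Suc j) x = D m j x + \<eta> j x" if "m \<le> j" for m j x
    using that unfolding D_def by (simp add: atLeastLessThanSuc)
  have Dzero: "D m j x = 0" if "j \<le> m" for m j x
    using that unfolding D_def by simp
  have Dsq: "integrable M (\<lambda>x. (D m j x)\<^sup>2)" for m j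
  proof (induction j)
    case 0 then show ?case by (simp add: Dzero)
  next
    case (Suc j)
    show ?case
    proof (cases "m \<le> j")
      case True
      then show ?thesis unfolding Dstep[OF True] using int_sq_add[OF DM etaM Suc sq] by simp
    next
      case False
      then show ?thesis by (simp add: Dzero)
    qed
  qed
  have Dmom: "(\<integral>x. (D m j x)\<^sup>2 \<partial>M) = (\<Sum>k\<in>{m..<j}. \<integral>x. (\<eta> k x)\<^sup>2 \<partial>M)" if "m \<le> j" for m j
    using that
  proof (induction j rule: dec_induct)
    case base then show ?case by (simp add: Dzero)
  next
    case (step j)
    have i1: "integrable M (\<lambda>x. D m j x * \<eta> j x)" by (rule int_mult_L2[OF DM etaM Dsq sq])
    have "(\<integral>x. (D m (Suc j) x)\<^sup>2 \<partial>M) = (\<integral>x. (D m j x)\<^sup>2 + 2 * (D m j x * \<eta> j x) + (\<eta> j x)\<^sup>2 \<partial>M)"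
      by (rule Bochner_Integration.integral_cong) (auto simp: Dstep[OF step(1)] power2_sum)
    also have "\<dots> = (\<integral>x. (D m j x)\<^sup>2 \<partial>M) + 2 * (\<integral>x. D m j x * \<eta> j x \<partial>M) + (\<integral>x. (\<eta> j x)\<^sup>2 \<partial>M)"
      using Dsq i1 sq by simp
    also have "(\<integral>x. D m j x * \<eta> j x \<partial>M) = 0" by (rule orth[OF DG Dsq])
    finally show ?case using step(1,3) by (simp add: atLeastLessThanSuc)
  qed
  define B where "B l m n = {x\<in>space M. \<exists>i\<in>{m..n}. l \<le> \<bar>D m i x\<bar>}" for l :: real and m n
  have BG: "B l m n \<in> sets (G n)" for l m n
  proof -
    have "B l m n = (\<Union>i\<in>{m..n}. {x\<in>space (G n). l \<le> \<bar>D m i x\<bar>})"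
      using sub[of n] unfolding B_def subalgebra_def by auto
    also have "\<dots> \<in> sets (G n)"
    proof (rule sets.finite_UN)
      fix i assume "i \<in> {m..n}"
      then have [measurable]: "D m i \<in> borel_measurable (G n)" using measG[OF DG] by auto
      show "{x\<in>space (G n). l \<le> \<bar>D m i x\<bar>} \<in> sets (G n)" by measurable
    qed auto
    finally show ?thesis .
  qed
  have BM: "B l m n \<in> sets M" for l m n using BG sub unfolding subalgebra_def by blast
  have iBDg: "integrable M (\<lambda>x. indicator (B l m n) x * (D m n x)\<^sup>2)" for l m n
    by (rule Bochner_Integration.integrable_bound[OF Dsq[of m n]]) (use DM BM in \<open>auto simp: indicator_def\<close>)
  have maxi: "l\<^sup>2 * measure M (B l m n) \<le> (\<integral>x. indicator (B l m n) x * (D m n x)\<^sup>2 \<partial>M)"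
    if "m \<le> n" "l > 0" for l m n
    using that(1)
  proof (induction n rule: dec_induct)
    case base
    have "B l m m = {}" using that(2) unfolding B_def by (auto simp: Dzero)
    then show ?case by simp
  next
    case (step n)
    define C where "C = {x\<in>space M. x \<notin> B l m n \<and> l \<le> \<bar>D m (Suc n) x\<bar>}"
    have CM: "C \<in> sets M" unfolding C_def using BM DM by measurable
    have BS: "B l m (Suc n) = B l m n \<union> C"
      unfolding B_def C_def using step(1) by (auto simp: le_Suc_eq)
    have disj: "B l m n \<inter> C = {}" unfolding C_def by auto
    define Z where "Z x = indicator (B l m n) x * D m n x" for x
    have ZG: "Z \<in> borel_measurable (G n)" unfolding Z_def using BG DG by measurable
    have ZM: "Z \<in> borel_measurable M" using measM[OF ZG] .
    have ZsqM: "(\<lambda>x. (Z x)\<^sup>2) \<in> borel_measurable M" using ZM by measurable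
    have Zsq: "integrable M (\<lambda>x. (Z x)\<^sup>2)"
      by (rule Bochner_Integration.integrable_bound[OF Dsq[of m n] ZsqM]) (auto simp: Z_def indicator_def)
    have iZ: "integrable M (\<lambda>x. Z x * \<eta> n x)" by (rule int_mult_L2[OF ZM etaM Zsq sq])
    have iBD: "integrable M (\<lambda>x. indicator (B l m n) x * (D m n x)\<^sup>2)"
      by (rule Bochner_Integration.integrable_bound[OF Dsq[of m n]]) (use DM BM in \<open>auto simp: indicator_def\<close>)
    have iBD': "integrable M (\<lambda>x. indicator (B l m (Suc n)) x * (D m (Suc n) x)\<^sup>2)"
      by (rule Bochner_Integration.integrable_bound[OF Dsq[of m "Suc n"]]) (use DM BM in \<open>auto simp: indicator_def\<close>)
    have iC: "integrable M (\<lambda>x. l\<^sup>2 * indicator C x)"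
      by (rule integrable_mult_right, rule integrable_real_indicator[OF CM]) (simp add: less_top[symmetric])
    have pw: "indicator (B l m n) x * (D m n x)\<^sup>2 + 2 * (Z x * \<eta> n x) + l\<^sup>2 * indicator C x
        \<le> indicator (B l m (Suc n)) x * (D m (Suc n) x)\<^sup>2" for x
    proof (cases "x \<in> B l m n")
      case True
      then have "x \<notin> C" unfolding C_def by auto
      then show ?thesis using True unfolding BS Z_def Dstep[OF step(1)] by (simp add: power2_sum)
    next
      case False
      show ?thesis
      proof (cases "x \<in> C")
        case True
        then have "l \<le> \<bar>D m (Suc n) x\<bar>" unfolding C_def by auto
        then have "l\<^sup>2 \<le> (D m (Suc n) x)\<^sup>2" using that(2)
          by (metis abs_ge_zero less_imp_le power2_abs power_mono)
        then show ?thesis using False True unfolding BS Z_def by simp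
      next
        case F2: False
        then show ?thesis using False unfolding BS Z_def by simp
      qed
    qed
    have "l\<^sup>2 * measure M (B l m (Suc n)) = l\<^sup>2 * measure M (B l m n) + l\<^sup>2 * measure M C"
      unfolding BS using finite_measure_Union[OF BM CM disj] by (simp add: algebra_simps)
    also have "\<dots> \<le> (\<integral>x. indicator (B l m n) x * (D m n x)\<^sup>2 \<partial>M) + 2 * (\<integral>x. Z x * \<eta> n x \<partial>M) + (\<integral>x. l\<^sup>2 * indicator C x \<partial>M)"
      using step(3) orth[OF ZG Zsq] CM by simp
    also have "\<dots> = (\<integral>x. indicator (B l m n) x * (D m n x)\<^sup>2 + 2 * (Z x * \<eta> n x) + l\<^sup>2 * indicator C x \<partial>M)"
      using iBD iZ iC by simp
    also have "\<dots> \<le> (\<integral>x. indicator (B l m (Suc n)) x * (D m (Suc n) x)\<^sup>2 \<partial>M)"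
      by (rule integral_mono[OF _ iBD' pw]) (use iBD iZ iC in auto)
    finally show ?case .
  qed
  define e where "e k = (\<integral>x. (\<eta> k x)\<^sup>2 \<partial>M)" for k
  have e0: "0 \<le> e k" for k unfolding e_def by (rule integral_nonneg_AE) simp
  define t where "t m = (\<Sum>k. e (k + m))" for m
  have summ': "summable e" using summ unfolding e_def .
  have t0: "t \<longlonglongrightarrow> 0"
  proof -
    have teq: "t = (\<lambda>m. suminf e - (\<Sum>i<m. e i))"
      by (rule ext) (unfold t_def, rule suminf_minus_initial_segment[OF summ'])
    have "(\<lambda>m. suminf e - (\<Sum>i<m. e i)) \<longlonglongrightarrow> suminf e - suminf e"
      by (intro tendsto_diff tendsto_const summable_LIMSEQ[OF summ'])
    then show ?thesis unfolding teq by simp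
  qed
  have Bt: "l\<^sup>2 * measure M (B l m (n + m)) \<le> t m" if "l > 0" for l m n
  proof -
    have "l\<^sup>2 * measure M (B l m (n + m)) \<le> (\<integral>x. indicator (B l m (n+m)) x * (D m (n+m) x)\<^sup>2 \<partial>M)"
      by (rule maxi) (use that in auto)
    also have "\<dots> \<le> (\<integral>x. (D m (n+m) x)\<^sup>2 \<partial>M)"
      by (rule integral_mono[OF iBDg Dsq]) (auto simp: indicator_def)
    also have "\<dots> = (\<Sum>k\<in>{m..<n+m}. e k)" using Dmom[of m "n+m"] unfolding e_def by simp
    also have "\<dots> = (\<Sum>k\<in>{0..<n}. e (k+m))" using sum.shift_bounds_nat_ivl[of e 0 m n] by simp
    also have "\<dots> \<le> t m" unfolding t_def
      by (rule sum_le_suminf) (use summable_ignore_initial_segment[OF summ'] e0 in auto)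
    finally show ?thesis .
  qed
  define A where "A l m = (\<Union>n. B l m (n + m))" for l m
  have AM: "A l m \<in> sets M" for l m unfolding A_def using BM by auto
  have At: "l\<^sup>2 * measure M (A l m) \<le> t m" if "l > 0" for l m
  proof -
    have inc: "incseq (\<lambda>n. B l m (n + m))" unfolding incseq_def B_def by force
    have "(\<lambda>n. measure M (B l m (n + m))) \<longlonglongrightarrow> measure M (A l m)"
      unfolding A_def by (rule finite_Lim_measure_incseq) (use BM inc in auto)
    then have "(\<lambda>n. l\<^sup>2 * measure M (B l m (n + m))) \<longlonglongrightarrow> l\<^sup>2 * measure M (A l m)"
      by (intro tendsto_mult_left)
    then show ?thesis by (rule LIMSEQ_le_const2) (use Bt[OF that] in auto)
  qed
  have Aset: "x \<in> A l m \<longleftrightarrow> x \<in> space M \<and> (\<exists>i\<ge>m. l \<le> \<bar>D m i x\<bar>)" for x l m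
  proof
    assume "x \<in> A l m" then show "x \<in> space M \<and> (\<exists>i\<ge>m. l \<le> \<bar>D m i x\<bar>)" unfolding A_def B_def by auto
  next
    assume a: "x \<in> space M \<and> (\<exists>i\<ge>m. l \<le> \<bar>D m i x\<bar>)"
    then obtain i where "i \<ge> m" "l \<le> \<bar>D m i x\<bar>" by auto
    then have "x \<in> B l m ((i - m) + m)" using a unfolding B_def by auto
    then show "x \<in> A l m" unfolding A_def by blast
  qed
  have AEq: "AE x in M. \<exists>m. \<forall>i\<ge>m. \<bar>D m i x\<bar> < 1 / real (Suc q)" for q
  proof -
    define l where "l = 1 / real (Suc q)"
    have lpos: "l > 0" unfolding l_def by simp
    define N where "N = (\<Inter>m. A l m)"
    have NM: "N \<in> sets M" unfolding N_def using AM by auto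
    have le: "measure M N \<le> t m / l\<^sup>2" for m
    proof -
      have "measure M N \<le> measure M (A l m)" unfolding N_def by (rule finite_measure_mono) (auto intro: AM)
      also have "\<dots> \<le> t m / l\<^sup>2" using At[OF lpos, of m] lpos by (simp add: field_simps)
      finally show ?thesis .
    qed
    have "(\<lambda>m. t m / l\<^sup>2) \<longlonglongrightarrow> 0 / l\<^sup>2" by (intro tendsto_divide t0 tendsto_const) (use lpos in simp)
    then have "measure M N \<le> 0 / l\<^sup>2" by (rule LIMSEQ_le_const) (use le in auto)
    then have "emeasure M N = 0" by (simp add: emeasure_eq_measure measure_nonneg antisym)
    then have "N \<in> null_sets M" using NM by (simp add: null_sets_def)
    then show ?thesis
    proof (rule AE_I')
      show "{x \<in> space M. \<not> (\<exists>m. \<forall>i\<ge>m. \<bar>D m i x\<bar> < 1 / real (Suc q))} \<subseteq> N"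
        unfolding N_def using Aset l_def by (auto simp: not_less)
    qed
  qed
  have "AE x in M. \<forall>q. \<exists>m. \<forall>i\<ge>m. \<bar>D m i x\<bar> < 1 / real (Suc q)"
    using AEq by (simp add: AE_all_countable)
  then show ?thesis
    by (rule AE_mp) (auto intro!: AE_I2 cauchy_aux simp: D_def)
qed



lemma comp_meas[measurable]:
  fixes f :: "'a \<Rightarrow> real ^ 'p"
  assumes "f \<in> borel_measurable N"
  shows "(\<lambda>x. f x $ t) \<in> borel_measurable N"
proof -
  have "(\<lambda>x. f x \<bullet> axis t 1) \<in> borel_measurable N" using assms by measurable
  then show ?thesis by (simp add: inner_axis)
qed

lemma vec_meas:
  fixes g :: "'p::finite \<Rightarrow> 'a \<Rightarrow> real"
  assumes "\<And>t. g t \<in> borel_measurable N"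
  shows "(\<lambda>x. \<chi> t. g t x) \<in> borel_measurable N"
  unfolding borel_measurable_euclidean_space[where 'c="real^'p"]
  using assms by (auto simp: Basis_vec_def inner_axis)

lemma ce_facts:
  fixes f :: "'a \<Rightarrow> real"
  assumes P: "prob_space M" and sub: "subalgebra M G"
    and fM[measurable]: "f \<in> borel_measurable M" and fsq: "integrable M (\<lambda>x. (f x)\<^sup>2)"
  shows "integrable M (\<lambda>x. (real_cond_exp M G f x)\<^sup>2)"
    and "\<And>W. W \<in> borel_measurable G \<Longrightarrow> integrable M (\<lambda>x. (W x)\<^sup>2) \<Longrightarrow>
          (\<integral>x. W x * (f x - real_cond_exp M G f x) \<partial>M) = 0"
    and "AE x in M. real_cond_exp M G (\<lambda>x. f x - real_cond_exp M G f x) x = 0"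
proof -
  interpret prob_space M by fact
  interpret fms: finite_measure_subalgebra M G
    by (simp add: finite_measure_subalgebra_def finite_measure_subalgebra_axioms_def sub finite_measure_axioms)
  have fint: "integrable M f"
  proof (rule Bochner_Integration.integrable_bound[of _ "\<lambda>x. 1 + (f x)\<^sup>2"])
    show "integrable M (\<lambda>x. 1 + (f x)\<^sup>2)" using fsq by simp
    have "\<bar>f x\<bar> \<le> 1 + (f x)\<^sup>2" for x
      using zero_le_power2[of "\<bar>f x\<bar> - 1"] unfolding power2_diff power2_abs by simp
    then show "AE x in M. norm (f x) \<le> norm (1 + (f x)\<^sup>2)" by simp
  qed simp
  show ce2: "integrable M (\<lambda>x. (real_cond_exp M G f x)\<^sup>2)"
    using fms.integrable_convex_cond_exp[of f UNIV _ _ power2] fint fsq convex_power2 by auto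
  have ceM: "real_cond_exp M G f \<in> borel_measurable M" by simp
  show "(\<integral>x. W x * (f x - real_cond_exp M G f x) \<partial>M) = 0"
    if WG: "W \<in> borel_measurable G" and Wsq: "integrable M (\<lambda>x. (W x)\<^sup>2)" for W
  proof -
    have WM[measurable]: "W \<in> borel_measurable M" using measurable_from_subalg[OF sub WG] .
    have bnd: "\<bar>a * b\<bar> \<le> a\<^sup>2 + b\<^sup>2" for a b :: real
      using zero_le_power2[of "a - b"] zero_le_power2[of "a + b"] unfolding power2_diff power2_sum abs_le_iff by linarith
    have i1: "integrable M (\<lambda>x. W x * f x)"
      by (rule Bochner_Integration.integrable_bound[of _ "\<lambda>x. (W x)\<^sup>2 + (f x)\<^sup>2"]) (use Wsq fsq bnd in auto)
    have i2: "integrable M (\<lambda>x. W x * real_cond_exp M G f x)"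
      by (rule fms.real_cond_exp_intg(1)[OF i1 WG fM])
    have "(\<integral>x. W x * (f x - real_cond_exp M G f x) \<partial>M) = (\<integral>x. W x * f x - W x * real_cond_exp M G f x \<partial>M)"
      by (simp add: algebra_simps)
    also have "\<dots> = (\<integral>x. W x * f x \<partial>M) - (\<integral>x. W x * real_cond_exp M G f x \<partial>M)"
      using i1 i2 by simp
    also have "\<dots> = 0" using fms.real_cond_exp_intg(2)[OF i1 WG fM] by simp
    finally show ?thesis .
  qed
  have ceint: "integrable M (real_cond_exp M G f)" using fms.real_cond_exp_int(1)[OF fint] .
  have "AE x in M. real_cond_exp M G (\<lambda>x. f x - real_cond_exp M G f x) x
      = real_cond_exp M G f x - real_cond_exp M G (real_cond_exp M G f) x"
    using fms.real_cond_exp_diff[OF fint ceint] .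
  moreover have "AE x in M. real_cond_exp M G (real_cond_exp M G f) x = real_cond_exp M G f x"
    using fms.real_cond_exp_F_meas[OF ceint] by simp
  ultimately show "AE x in M. real_cond_exp M G (\<lambda>x. f x - real_cond_exp M G f x) x = 0"
    by eventually_elim simp
qed



lemma AE_summable_nonneg:
  fixes f :: "nat \<Rightarrow> 'a \<Rightarrow> real"
  assumes meas: "\<And>i. f i \<in> borel_measurable M" and int: "\<And>i. integrable M (f i)"
    and nn: "\<And>i x. 0 \<le> f i x" and summ: "summable (\<lambda>i. \<integral>x. f i x \<partial>M)"
  shows "AE x in M. summable (\<lambda>i. f i x)"
proof -
  have "(\<integral>\<^sup>+x. (\<Sum>i. ennreal (f i x)) \<partial>M) = (\<Sum>i. \<integral>\<^sup>+x. ennreal (f i x) \<partial>M)"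
    by (rule nn_integral_suminf) (use meas in auto)
  also have "\<dots> = (\<Sum>i. ennreal (\<integral>x. f i x \<partial>M))"
    by (subst nn_integral_eq_integral[OF int]) (use nn in auto)
  also have "\<dots> = ennreal (\<Sum>i. \<integral>x. f i x \<partial>M)"
    by (rule suminf_ennreal2[OF _ summ]) (use nn in \<open>auto intro: integral_nonneg_AE\<close>)
  finally have "(\<integral>\<^sup>+x. (\<Sum>i. ennreal (f i x)) \<partial>M) < \<infinity>" by simp
  then have "AE x in M. (\<Sum>i. ennreal (f i x)) < \<infinity>"
    by (intro finite_nn_integral_imp_ae_finite) (use meas in auto)
  then show ?thesis
    by eventually_elim (rule summable_suminf_not_top, use nn in auto)
qed

lemma res_comp:
  "resid M F X (Suc j) x $ t = X (Suc j) x $ t - real_cond_exp M (F j) (\<lambda>x. X (Suc j) x $ t) x"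
  by (simp add: resid_def vcond_exp_def)

lemma comp_facts:
  fixes M :: "'a measure" and F :: "nat \<Rightarrow> 'a measure" and X :: "nat \<Rightarrow> 'a \<Rightarrow> real ^ 'p"
  assumes P: "prob_space M"
    and sub: "\<And>n. subalgebra M (F n)"
    and mono: "\<And>m n. m \<le> n \<Longrightarrow> sets (F m) \<subseteq> sets (F n)"
    and XF: "\<And>n. X n \<in> borel_measurable (F n)"
    and Xsq: "\<And>n. integrable M (\<lambda>\<omega>. (norm (X n \<omega>))\<^sup>2)"
  shows "(\<lambda>x. resid M F X (Suc j) x $ t) \<in> borel_measurable (F (Suc j))"
    and "integrable M (\<lambda>x. (resid M F X (Suc j) x $ t)\<^sup>2)"
    and "\<And>W. W \<in> borel_measurable (F j) \<Longrightarrow> integrable M (\<lambda>x. (W x)\<^sup>2) \<Longrightarrow>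
          (\<integral>x. W x * resid M F X (Suc j) x $ t \<partial>M) = 0"
    and "AE x in M. cond_var M (F j) (\<lambda>x. resid M F X (Suc j) x $ t) x
            = real_cond_exp M (F j) (\<lambda>x. (resid M F X (Suc j) x $ t)\<^sup>2) x"
    and "(\<integral>x. (resid M F X (Suc j) x $ t)\<^sup>2 \<partial>M) = (\<integral>x. real_cond_exp M (F j) (\<lambda>x. (resid M F X (Suc j) x $ t)\<^sup>2) x \<partial>M)"
proof -
  interpret prob_space M by fact
  interpret fms: finite_measure_subalgebra M "F j"
    by (simp add: finite_measure_subalgebra_def finite_measure_subalgebra_axioms_def sub finite_measure_axioms)
  define f where "f = (\<lambda>x. X (Suc j) x $ t)"
  have fF: "f \<in> borel_measurable (F (Suc j))" unfolding f_def using XF by measurable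
  have fM[measurable]: "f \<in> borel_measurable M" using measurable_from_subalg[OF sub fF] .
  have fsq: "integrable M (\<lambda>x. (f x)\<^sup>2)"
  proof (rule Bochner_Integration.integrable_bound[OF Xsq[of "Suc j"]])
    show "(\<lambda>x. (f x)\<^sup>2) \<in> borel_measurable M" by measurable
    have "(f x)\<^sup>2 \<le> (norm (X (Suc j) x))\<^sup>2" for x
      unfolding f_def using component_le_norm_cart[of "X (Suc j) x" t]
      by (metis abs_ge_zero power2_abs power_mono)
    then show "AE x in M. norm ((f x)\<^sup>2) \<le> norm ((norm (X (Suc j) x))\<^sup>2)" by simp
  qed
  have req: "(\<lambda>x. resid M F X (Suc j) x $ t) = (\<lambda>x. f x - real_cond_exp M (F j) f x)"
    by (rule ext) (simp add: res_comp f_def)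
  have reqp: "resid M F X (Suc j) x $ t = f x - real_cond_exp M (F j) f x" for x
    by (simp add: res_comp f_def)
  have ceF: "real_cond_exp M (F j) f \<in> borel_measurable (F (Suc j))"
    using measurable_mono[of borel borel "F j" "F (Suc j)"] mono[of j "Suc j"] sub[of j] sub[of "Suc j"]
      borel_measurable_cond_exp[of M "F j" f]
    unfolding subalgebra_def by auto
  show "(\<lambda>x. resid M F X (Suc j) x $ t) \<in> borel_measurable (F (Suc j))"
    unfolding req using fF ceF by measurable
  note cf = ce_facts[OF P sub[of j] fM fsq]
  have ceM[measurable]: "real_cond_exp M (F j) f \<in> borel_measurable M" by simp
  have esq0: "integrable M (\<lambda>x. (f x - real_cond_exp M (F j) f x)\<^sup>2)"
  proof (rule Bochner_Integration.integrable_bound[of _ "\<lambda>x. 2 * (f x)\<^sup>2 + 2 * (real_cond_exp M (F j) f x)\<^sup>2"])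
    show "integrable M (\<lambda>x. 2 * (f x)\<^sup>2 + 2 * (real_cond_exp M (F j) f x)\<^sup>2)" using fsq cf(1) by simp
    show "(\<lambda>x. (f x - real_cond_exp M (F j) f x)\<^sup>2) \<in> borel_measurable M" by measurable
    have "(a - b)\<^sup>2 \<le> 2 * a\<^sup>2 + 2 * b\<^sup>2" for a b :: real
      using zero_le_power2[of "a + b"] unfolding power2_diff power2_sum by linarith
    then show "AE x in M. norm ((f x - real_cond_exp M (F j) f x)\<^sup>2) \<le> norm (2 * (f x)\<^sup>2 + 2 * (real_cond_exp M (F j) f x)\<^sup>2)"
      by simp
  qed
  show esq: "integrable M (\<lambda>x. (resid M F X (Suc j) x $ t)\<^sup>2)"
    unfolding reqp by (rule esq0)
  show "(\<integral>x. W x * resid M F X (Suc j) x $ t \<partial>M) = 0"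
    if "W \<in> borel_measurable (F j)" "integrable M (\<lambda>x. (W x)\<^sup>2)" for W
    unfolding reqp using cf(2)[OF that] .
  have ae0: "AE x in M. real_cond_exp M (F j) (\<lambda>x. resid M F X (Suc j) x $ t) x = 0"
    unfolding req using cf(3) .
  have "AE x in M. real_cond_exp M (F j) (\<lambda>x. (resid M F X (Suc j) x $ t - real_cond_exp M (F j) (\<lambda>x. resid M F X (Suc j) x $ t) x)\<^sup>2) x
      = real_cond_exp M (F j) (\<lambda>x. (resid M F X (Suc j) x $ t)\<^sup>2) x"
  proof (rule fms.real_cond_exp_cong)
    show "AE x in M. (resid M F X (Suc j) x $ t - real_cond_exp M (F j) (\<lambda>x. resid M F X (Suc j) x $ t) x)\<^sup>2
       = (resid M F X (Suc j) x $ t)\<^sup>2" using ae0 by eventually_elim simp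
    show "(\<lambda>x. (resid M F X (Suc j) x $ t - real_cond_exp M (F j) (\<lambda>x. resid M F X (Suc j) x $ t) x)\<^sup>2) \<in> borel_measurable M"
      unfolding reqp by measurable
    show "(\<lambda>x. (resid M F X (Suc j) x $ t)\<^sup>2) \<in> borel_measurable M"
      unfolding reqp by measurable
  qed
  then show "AE x in M. cond_var M (F j) (\<lambda>x. resid M F X (Suc j) x $ t) x
            = real_cond_exp M (F j) (\<lambda>x. (resid M F X (Suc j) x $ t)\<^sup>2) x"
    unfolding cond_var_def .
  show "(\<integral>x. (resid M F X (Suc j) x $ t)\<^sup>2 \<partial>M) = (\<integral>x. real_cond_exp M (F j) (\<lambda>x. (resid M F X (Suc j) x $ t)\<^sup>2) x \<partial>M)"
    using fms.real_cond_exp_int(2)[OF esq] by simp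
qed



lemma norm_sq_vec: "(norm (x :: real ^ 'p))\<^sup>2 = (\<Sum>i\<in>UNIV. (x $ i)\<^sup>2)"
  unfolding power2_norm_eq_inner inner_vec_def by (simp add: power2_eq_square)

lemma inner_vec_sum: "(x :: real ^ 'p) \<bullet> y = (\<Sum>i\<in>UNIV. x $ i * y $ i)"
  by (simp add: inner_vec_def)

definition cf :: "'a measure \<Rightarrow> (nat \<Rightarrow> 'a measure) \<Rightarrow> (nat \<Rightarrow> 'a \<Rightarrow> real^'p) \<Rightarrow> (nat \<Rightarrow> real) \<Rightarrow> nat \<Rightarrow> 'a \<Rightarrow> real^'p" where
  "cf M F X \<beta> j \<omega> = (if X j \<omega> \<noteq> 0 \<and> norm (vcond_exp M (F j) (X (Suc j)) \<omega>) \<le> \<beta> (Suc j) * norm (X j \<omega>)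
     then vcond_exp M (F j) (X (Suc j)) \<omega> /\<^sub>R (1 + (norm (X j \<omega>))\<^sup>2) else 0)"

lemma cf_norm:
  assumes "0 \<le> \<beta> (Suc j)"
  shows "norm (cf M F X \<beta> j \<omega>) \<le> \<beta> (Suc j)"
proof (cases "X j \<omega> \<noteq> 0 \<and> norm (vcond_exp M (F j) (X (Suc j)) \<omega>) \<le> \<beta> (Suc j) * norm (X j \<omega>)")
  case True
  define a where "a = norm (X j \<omega>)"
  have a0: "0 \<le> a" unfolding a_def by simp
  have d: "0 < 1 + a\<^sup>2" by (simp add: add_pos_nonneg)
  have al: "a \<le> 1 + a\<^sup>2"
  proof -
    have "2 * a \<le> a\<^sup>2 + 1" using zero_le_power2[of "a - 1"] by (simp add: power2_diff)
    then show ?thesis using a0 by linarith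
  qed
  have "norm (cf M F X \<beta> j \<omega>) = norm (vcond_exp M (F j) (X (Suc j)) \<omega>) / (1 + a\<^sup>2)"
    using True d unfolding cf_def a_def by (simp add: field_simps)
  also have "\<dots> \<le> \<beta> (Suc j) * a / (1 + a\<^sup>2)"
    using True d unfolding a_def by (simp add: divide_right_mono)
  also have "\<dots> \<le> \<beta> (Suc j)"
    using d al assms a0 by (simp add: pos_divide_le_eq mult_left_mono)
  finally show ?thesis .
next
  case False
  then show ?thesis using assms unfolding cf_def by auto
qed

lemma vce_meas[measurable]:
  "vcond_exp M G Y \<in> borel_measurable G"
  unfolding vcond_exp_def by (rule vec_meas) simp

lemma cf_meas:
  assumes "X j \<in> borel_measurable (F j)"
  shows "cf M F X \<beta> j \<in> borel_measurable (F j)"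
proof -
  have [measurable]: "X j \<in> borel_measurable (F j)" by fact
  show ?thesis unfolding cf_def[abs_def] by measurable
qed

lemma core:
  fixes M :: "'a measure" and F :: "nat \<Rightarrow> 'a measure" and X :: "nat \<Rightarrow> 'a \<Rightarrow> real ^ 'p"
  assumes P: "prob_space M"
    and sub: "\<And>n. subalgebra M (F n)"
    and monoF: "\<And>m n. m \<le> n \<Longrightarrow> sets (F m) \<subseteq> sets (F n)"
    and XF: "\<And>n. X n \<in> borel_measurable (F n)"
    and Xsq: "\<And>n. integrable M (\<lambda>\<omega>. (norm (X n \<omega>))\<^sup>2)"
    and \<beta>0: "\<And>n. 0 \<le> \<beta> n" and \<beta>B: "\<And>n. \<beta> n \<le> Bc"
    and v0: "\<And>n. 0 \<le> v n" and vs: "summable v"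
    and A8ae: "AE \<omega> in M. \<forall>n\<ge>1. \<forall>t. cond_var M (F (n - 1)) (\<lambda>x. resid M F X n x $ t) \<omega> \<le> v n"
  shows "AE \<omega> in M. summable (\<lambda>j. cf M F X \<beta> j \<omega> \<bullet> resid M F X (Suc j) \<omega>)
            \<and> summable (\<lambda>j. (norm (resid M F X (Suc j) \<omega>))\<^sup>2)"
proof -
  interpret prob_space M by fact
  have cfa1: "(\<lambda>x. resid M F X (Suc j) x $ t) \<in> borel_measurable (F (Suc j))" for j t
    by (rule comp_facts(1)[where M=M and F=F and X=X]) (simp_all add: P sub monoF XF Xsq)
  have cfa2: "integrable M (\<lambda>x. (resid M F X (Suc j) x $ t)\<^sup>2)" for j t
    by (rule comp_facts(2)[where M=M and F=F and X=X]) (simp_all add: P sub monoF XF Xsq)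
  have cfa3: "(\<integral>x. W x * resid M F X (Suc j) x $ t \<partial>M) = 0"
    if "W \<in> borel_measurable (F j)" "integrable M (\<lambda>x. (W x)\<^sup>2)" for W j t
    by (rule comp_facts(3)[where M=M and F=F and X=X]) (simp_all add: P sub monoF XF Xsq that)
  have cfa4: "AE x in M. cond_var M (F j) (\<lambda>x. resid M F X (Suc j) x $ t) x
            = real_cond_exp M (F j) (\<lambda>x. (resid M F X (Suc j) x $ t)\<^sup>2) x" for j t
    by (rule comp_facts(4)[where M=M and F=F and X=X]) (simp_all add: P sub monoF XF Xsq)
  have cfa5: "(\<integral>x. (resid M F X (Suc j) x $ t)\<^sup>2 \<partial>M) = (\<integral>x. real_cond_exp M (F j) (\<lambda>x. (resid M F X (Suc j) x $ t)\<^sup>2) x \<partial>M)" for j t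
    by (rule comp_facts(5)[where M=M and F=F and X=X]) (simp_all add: P sub monoF XF Xsq)
  have Bc0: "0 \<le> Bc" using \<beta>0[of 0] \<beta>B[of 0] by simp
  have measFM: "f \<in> borel_measurable M" if "f \<in> borel_measurable (F n)" for f :: "'a \<Rightarrow> real" and n
    using measurable_from_subalg[OF sub that] .
  have measFF: "f \<in> borel_measurable (F n)" if "f \<in> borel_measurable (F m)" "m \<le> n" for f :: "'a \<Rightarrow> real" and m n
    using measurable_mono[of borel borel "F m" "F n"] monoF[OF that(2)] sub[of m] sub[of n] that(1)
    unfolding subalgebra_def by auto
  define e where "e j t x = resid M F X (Suc j) x $ t" for j t x
  define c where "c j t x = cf M F X \<beta> j x $ t" for j t x
  have eF: "e j t \<in> borel_measurable (F (Suc j))" for j t unfolding e_def by (rule cfa1)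
  have eM[measurable]: "e j t \<in> borel_measurable M" for j t using measFM[OF eF] .
  have esq: "integrable M (\<lambda>x. (e j t x)\<^sup>2)" for j t unfolding e_def by (rule cfa2)
  have eorth: "(\<integral>x. W x * e j t x \<partial>M) = 0" if "W \<in> borel_measurable (F j)" "integrable M (\<lambda>x. (W x)\<^sup>2)" for W j t
    unfolding e_def by (rule cfa3[OF that])
  have ev: "(\<integral>x. (e j t x)\<^sup>2 \<partial>M) \<le> v (Suc j)" for j t
  proof -
    interpret fms: finite_measure_subalgebra M "F j"
      by (simp add: finite_measure_subalgebra_def finite_measure_subalgebra_axioms_def sub finite_measure_axioms)
    have ae: "AE x in M. real_cond_exp M (F j) (\<lambda>x. (e j t x)\<^sup>2) x \<le> v (Suc j)"
      using cfa4[of j t] A8ae unfolding e_def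
    proof eventually_elim
      case (elim x)
      have "cond_var M (F (Suc j - 1)) (\<lambda>x. resid M F X (Suc j) x $ t) x \<le> v (Suc j)"
        using elim(2)[rule_format, of "Suc j" t] by simp
      then show ?case using elim(1) by simp
    qed
    have "(\<integral>x. (e j t x)\<^sup>2 \<partial>M) = (\<integral>x. real_cond_exp M (F j) (\<lambda>x. (e j t x)\<^sup>2) x \<partial>M)"
      unfolding e_def by (rule cfa5)
    also have "\<dots> \<le> (\<integral>x. v (Suc j) \<partial>M)"
      by (rule integral_mono_AE[OF fms.real_cond_exp_int(1)[OF esq] _ ae]) simp
    also have "\<dots> = v (Suc j)" by (simp add: prob_space)
    finally show ?thesis .
  qed
  have nsq: "(norm (resid M F X (Suc j) x))\<^sup>2 = (\<Sum>t\<in>UNIV. (e j t x)\<^sup>2)" for j x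
    unfolding e_def by (rule norm_sq_vec)
  have sint: "integrable M (\<lambda>x. \<Sum>t\<in>UNIV. (e j t x)\<^sup>2)" for j using esq by simp
  have sbound: "(\<integral>x. (\<Sum>t\<in>UNIV. (e j t x)\<^sup>2) \<partial>M) \<le> real CARD('p) * v (Suc j)" for j
  proof -
    have "(\<integral>x. (\<Sum>t\<in>UNIV. (e j t x)\<^sup>2) \<partial>M) = (\<Sum>t\<in>UNIV. \<integral>x. (e j t x)\<^sup>2 \<partial>M)"
      by (simp add: esq)
    also have "\<dots> \<le> real (card (UNIV :: 'p set)) * v (Suc j)"
      by (rule sum_bounded_above) (use ev in auto)
    finally show ?thesis by simp
  qed
  have summ1: "summable (\<lambda>j. real CARD('p) * v (Suc j))"
    using vs by (intro summable_mult) (simp add: summable_Suc_iff)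
  have part1: "AE x in M. summable (\<lambda>j. \<Sum>t\<in>UNIV. (e j t x)\<^sup>2)"
  proof (rule AE_summable_nonneg)
    show "summable (\<lambda>j. \<integral>x. (\<Sum>t\<in>UNIV. (e j t x)\<^sup>2) \<partial>M)"
    proof (rule summable_comparison_test[OF _ summ1])
      show "\<exists>N. \<forall>n\<ge>N. norm (\<integral>x. (\<Sum>t\<in>UNIV. (e n t x)\<^sup>2) \<partial>M) \<le> real CARD('p) * v (Suc n)"
        using sbound by (auto intro!: exI[of _ 0] simp: integral_nonneg_AE sum_nonneg)
    qed
  qed (use sint in \<open>auto intro: sum_nonneg\<close>)
  define \<eta> where "\<eta> j x = (\<Sum>t\<in>UNIV. c j t x * e j t x)" for j x
  have \<eta>eq: "cf M F X \<beta> j x \<bullet> resid M F X (Suc j) x = \<eta> j x" for j x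
    unfolding \<eta>_def c_def e_def by (rule inner_vec_sum)
  have cnorm: "norm (cf M F X \<beta> j x) \<le> Bc" for j x
    using cf_norm[of \<beta> j M F X x] \<beta>0 \<beta>B order_trans by blast
  have cb: "\<bar>c j t x\<bar> \<le> Bc" for j t x
    unfolding c_def using component_le_norm_cart[of "cf M F X \<beta> j x" t] cnorm order_trans by blast
  have cF: "c j t \<in> borel_measurable (F j)" for j t
    unfolding c_def using comp_meas[OF cf_meas[OF XF]] .
  have cM[measurable]: "c j t \<in> borel_measurable M" for j t using measFM[OF cF] .
  have \<eta>F: "\<eta> j \<in> borel_measurable (F (Suc j))" for j
    unfolding \<eta>_def
  proof (rule borel_measurable_sum)
    fix t
    have [measurable]: "c j t \<in> borel_measurable (F (Suc j))" using measFF[OF cF] by simp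
    have [measurable]: "e j t \<in> borel_measurable (F (Suc j))" by (rule eF)
    show "(\<lambda>x. c j t x * e j t x) \<in> borel_measurable (F (Suc j))" by measurable
  qed
  have \<eta>M[measurable]: "\<eta> j \<in> borel_measurable M" for j using measFM[OF \<eta>F] .
  have \<eta>pw: "(\<eta> j x)\<^sup>2 \<le> Bc\<^sup>2 * (\<Sum>t\<in>UNIV. (e j t x)\<^sup>2)" for j x
  proof -
    let ?a = "cf M F X \<beta> j x" and ?b = "resid M F X (Suc j) x"
    have "(\<eta> j x)\<^sup>2 = (?a \<bullet> ?b)\<^sup>2" using \<eta>eq by simp
    also have "\<dots> \<le> (?a \<bullet> ?a) * (?b \<bullet> ?b)" by (rule Cauchy_Schwarz_ineq)
    also have "\<dots> = (norm ?a)\<^sup>2 * (norm ?b)\<^sup>2" by (simp add: power2_norm_eq_inner)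
    also have "\<dots> \<le> Bc\<^sup>2 * (norm ?b)\<^sup>2"
      by (rule mult_right_mono) (use cnorm in \<open>auto intro: power_mono\<close>)
    also have "\<dots> = Bc\<^sup>2 * (\<Sum>t\<in>UNIV. (e j t x)\<^sup>2)" using nsq by simp
    finally show ?thesis .
  qed
  have \<eta>sq: "integrable M (\<lambda>x. (\<eta> j x)\<^sup>2)" for j
  proof (rule Bochner_Integration.integrable_bound[of _ "\<lambda>x. Bc\<^sup>2 * (\<Sum>t\<in>UNIV. (e j t x)\<^sup>2)"])
    show "integrable M (\<lambda>x. Bc\<^sup>2 * (\<Sum>t\<in>UNIV. (e j t x)\<^sup>2))" using sint by simp
    show "(\<lambda>x. (\<eta> j x)\<^sup>2) \<in> borel_measurable M" by measurable
    show "AE x in M. norm ((\<eta> j x)\<^sup>2) \<le> norm (Bc\<^sup>2 * (\<Sum>t\<in>UNIV. (e j t x)\<^sup>2))"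
      using \<eta>pw by (auto simp: sum_nonneg)
  qed
  have \<eta>orth: "(\<integral>x. Z x * \<eta> j x \<partial>M) = 0"
    if ZF: "Z \<in> borel_measurable (F j)" and Zsq: "integrable M (\<lambda>x. (Z x)\<^sup>2)" for Z j
  proof -
    have ZM[measurable]: "Z \<in> borel_measurable M" using measFM[OF ZF] .
    have WF: "(\<lambda>x. Z x * c j t x) \<in> borel_measurable (F j)" for t
      using ZF cF by measurable
    have Wsq: "integrable M (\<lambda>x. (Z x * c j t x)\<^sup>2)" for t
    proof (rule Bochner_Integration.integrable_bound[of _ "\<lambda>x. Bc\<^sup>2 * (Z x)\<^sup>2"])
      show "integrable M (\<lambda>x. Bc\<^sup>2 * (Z x)\<^sup>2)" using Zsq by simp
      show "(\<lambda>x. (Z x * c j t x)\<^sup>2) \<in> borel_measurable M" by measurable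
      have "(Z x * c j t x)\<^sup>2 \<le> Bc\<^sup>2 * (Z x)\<^sup>2" for x
      proof -
        have "(c j t x)\<^sup>2 \<le> Bc\<^sup>2" using cb[of j t x] by (metis abs_ge_zero power2_abs power_mono)
        then have "(c j t x)\<^sup>2 * (Z x)\<^sup>2 \<le> Bc\<^sup>2 * (Z x)\<^sup>2" by (rule mult_right_mono) simp
        then show ?thesis by (simp add: power_mult_distrib mult.commute)
      qed
      then show "AE x in M. norm ((Z x * c j t x)\<^sup>2) \<le> norm (Bc\<^sup>2 * (Z x)\<^sup>2)" by simp
    qed
    have Wi: "integrable M (\<lambda>x. (Z x * c j t x) * e j t x)" for t
      by (rule int_mult_L2[OF _ eM Wsq esq]) measurable
    have "(\<integral>x. Z x * \<eta> j x \<partial>M) = (\<integral>x. (\<Sum>t\<in>UNIV. (Z x * c j t x) * e j t x) \<partial>M)"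
      unfolding \<eta>_def by (simp add: sum_distrib_left mult.assoc)
    also have "\<dots> = (\<Sum>t\<in>UNIV. \<integral>x. (Z x * c j t x) * e j t x \<partial>M)"
      by (simp add: Wi)
    also have "\<dots> = 0" using eorth[OF WF Wsq] by simp
    finally show ?thesis .
  qed
  have \<eta>summ: "summable (\<lambda>j. \<integral>x. (\<eta> j x)\<^sup>2 \<partial>M)"
  proof (rule summable_comparison_test[OF _ summable_mult[OF summ1, of "Bc\<^sup>2"]])
    show "\<exists>N. \<forall>n\<ge>N. norm (\<integral>x. (\<eta> n x)\<^sup>2 \<partial>M) \<le> Bc\<^sup>2 * (real CARD('p) * v (Suc n))"
    proof (intro exI allI impI)
      fix n :: nat
      have "(\<integral>x. (\<eta> n x)\<^sup>2 \<partial>M) \<le> (\<integral>x. Bc\<^sup>2 * (\<Sum>t\<in>UNIV. (e n t x)\<^sup>2) \<partial>M)"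
        by (rule integral_mono[OF \<eta>sq]) (use sint \<eta>pw in auto)
      also have "\<dots> = Bc\<^sup>2 * (\<integral>x. (\<Sum>t\<in>UNIV. (e n t x)\<^sup>2) \<partial>M)" by simp
      also have "\<dots> \<le> Bc\<^sup>2 * (real CARD('p) * v (Suc n))"
        by (rule mult_left_mono[OF sbound]) simp
      finally show "norm (\<integral>x. (\<eta> n x)\<^sup>2 \<partial>M) \<le> Bc\<^sup>2 * (real CARD('p) * v (Suc n))"
        by (simp add: integral_nonneg_AE)
    qed
  qed
  have part2: "AE x in M. summable (\<lambda>j. \<eta> j x)"
    by (rule mart_conv[OF P sub monoF \<eta>F \<eta>sq \<eta>orth \<eta>summ])
  show ?thesis
    using part1 part2 by eventually_elim (simp add: \<eta>eq nsq)
qed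



lemma ln_diff_le:
  fixes y y' :: real
  assumes "0 \<le> y" "0 \<le> y'"
  shows "ln (1 + y') - ln (1 + y) \<le> (y' - y) / (1 + y)"
proof -
  have p: "0 < 1 + y" "0 < 1 + y'" using assms by auto
  have "ln (1 + y') - ln (1 + y) = ln ((1 + y') / (1 + y))" using p by (simp add: ln_div)
  also have "\<dots> \<le> (1 + y') / (1 + y) - 1" by (rule ln_le_minus_one) (use p in simp)
  also have "\<dots> = (y' - y) / (1 + y)" using p by (simp add: field_simps)
  finally show ?thesis .
qed

lemma step_ineq:
  fixes xj xs m ep :: "real ^ 'p"
  assumes eq: "xs = m + ep" and bd: "norm m \<le> b * norm xj" and b0: "0 \<le> b"
  shows "ln (1 + (norm xs)\<^sup>2) \<le> ln (1 + (norm xj)\<^sup>2) + (b\<^sup>2 - 1) * ((norm xj)\<^sup>2 / (1 + (norm xj)\<^sup>2))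
           + 2 * ((m /\<^sub>R (1 + (norm xj)\<^sup>2)) \<bullet> ep) + (norm ep)\<^sup>2"
proof -
  define Y where "Y = (norm xj)\<^sup>2"
  define D where "D = 1 + Y"
  have Y0: "0 \<le> Y" unfolding Y_def by simp
  have D1: "1 \<le> D" unfolding D_def using Y0 by simp
  have Dp: "0 < D" using D1 by simp
  have Y': "(norm xs)\<^sup>2 = (norm m)\<^sup>2 + 2 * (m \<bullet> ep) + (norm ep)\<^sup>2"
    unfolding eq power2_norm_eq_inner by (simp add: inner_add algebra_simps inner_commute)
  have mb: "(norm m)\<^sup>2 \<le> b\<^sup>2 * Y"
  proof -
    have "(norm m)\<^sup>2 \<le> (b * norm xj)\<^sup>2" by (rule power_mono[OF bd]) simp
    then show ?thesis unfolding Y_def by (simp add: power_mult_distrib)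
  qed
  have inner_eq: "(m /\<^sub>R D) \<bullet> ep = (m \<bullet> ep) / D" by (simp add: divide_inverse mult.commute)
  have "ln (1 + (norm xs)\<^sup>2) - ln (1 + Y) \<le> ((norm xs)\<^sup>2 - Y) / D"
    unfolding D_def by (rule ln_diff_le) (use Y0 in auto)
  also have "\<dots> \<le> (b\<^sup>2 * Y - Y + 2 * (m \<bullet> ep) + (norm ep)\<^sup>2) / D"
    by (rule divide_right_mono) (use Y' mb Dp in auto)
  also have "\<dots> = (b\<^sup>2 - 1) * (Y / D) + 2 * ((m \<bullet> ep) / D) + (norm ep)\<^sup>2 / D"
    using Dp by (simp add: field_simps)
  also have "\<dots> \<le> (b\<^sup>2 - 1) * (Y / D) + 2 * ((m \<bullet> ep) / D) + (norm ep)\<^sup>2"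
  proof -
    have "(norm ep)\<^sup>2 / D \<le> (norm ep)\<^sup>2" using D1 by (simp add: divide_le_eq mult_le_cancel_left1)
    then show ?thesis by simp
  qed
  finally show ?thesis unfolding D_def[symmetric] Y_def[symmetric] inner_eq by simp
qed

lemma reset_ineq:
  fixes xs m ep :: "real ^ 'p"
  assumes eq: "xs = m + ep"
  shows "ln (1 + (norm xs)\<^sup>2) \<le> 2 * (norm m)\<^sup>2 + 2 * (norm ep)\<^sup>2"
proof -
  have "ln (1 + (norm xs)\<^sup>2) \<le> (1 + (norm xs)\<^sup>2) - 1" by (rule ln_le_minus_one) (simp add: add_pos_nonneg)
  also have "\<dots> = (norm xs)\<^sup>2" by simp
  also have "\<dots> \<le> (norm m + norm ep)\<^sup>2" unfolding eq by (rule power_mono[OF norm_triangle_ineq]) simp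
  also have "\<dots> \<le> 2 * (norm m)\<^sup>2 + 2 * (norm ep)\<^sup>2"
    using zero_le_power2[of "norm m - norm ep"] unfolding power2_diff power2_sum by linarith
  finally show ?thesis .
qed

lemma norm_from_u: "norm (v :: 'b :: real_normed_vector) = sqrt (exp (ln (1 + (norm v)\<^sup>2)) - 1)"
proof -
  have "exp (ln (1 + (norm v)\<^sup>2)) = 1 + (norm v)\<^sup>2" by (simp add: add_pos_nonneg)
  then show ?thesis by simp
qed

lemma g_bound:
  fixes a y :: real
  assumes a: "0 < a" and y: "0 \<le> y" and le: "a \<le> ln (1 + y)"
  shows "y \<noteq> 0" "1 - exp (- a) \<le> y / (1 + y)"
proof -
  have "exp a \<le> exp (ln (1 + y))" using le by simp
  then have ea: "exp a \<le> 1 + y" using y by (simp add: add_pos_nonneg)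
  have "1 < exp a" using a by simp
  then show "y \<noteq> 0" using ea by auto
  have "1 / (1 + y) \<le> 1 / exp a" by (rule divide_left_mono) (use ea y in auto)
  then have "1 - 1 / exp a \<le> 1 - 1 / (1 + y)" by simp
  also have "1 - 1 / (1 + y) = y / (1 + y)" using y by (simp add: field_simps)
  finally show "1 - exp (- a) \<le> y / (1 + y)" by (simp add: exp_minus divide_inverse)
qed



lemma psum_bound:
  fixes c :: "nat \<Rightarrow> real"
  assumes "summable c"
  obtains B where "\<And>n. \<bar>\<Sum>k<n. c k\<bar> \<le> B"
proof -
  have "convergent (\<lambda>n. \<Sum>k<n. c k)"
    using summable_LIMSEQ[OF assms] convergent_def by blast
  then have "Bseq (\<lambda>n. \<Sum>k<n. c k)" by (rule convergent_imp_Bseq)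
  then obtain K where "\<forall>n. norm (\<Sum>k<n. c k) \<le> K" unfolding Bseq_def by auto
  then show ?thesis using that by auto
qed

lemma det_conv:
  fixes u c r :: "nat \<Rightarrow> real" and R :: "nat \<Rightarrow> bool"
  assumes u0: "\<And>j. 0 \<le> u j" and cs: "summable c" and r0: "r \<longlonglongrightarrow> 0"
    and rs: "\<And>j. R j \<Longrightarrow> u (Suc j) \<le> r j" and ns: "\<And>j. \<not> R j \<Longrightarrow> u (Suc j) \<le> u j + c j"
  shows "convergent u"
proof (cases "\<exists>N. \<forall>j\<ge>N. \<not> R j")
  case True
  then obtain N where N: "\<forall>j\<ge>N. \<not> R j" by blast
  obtain B where B: "\<And>n. \<bar>\<Sum>k<n. c k\<bar> \<le> B" using psum_bound[OF cs] by blast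
  define z where "z j = u j - (\<Sum>k<j. c k)" for j
  define w where "w n = z (n + N)" for n
  have "decseq w"
  proof (rule decseq_SucI)
    fix n
    have "u (Suc (n + N)) \<le> u (n + N) + c (n + N)" using ns N by simp
    then show "w (Suc n) \<le> w n" unfolding w_def z_def by simp
  qed
  moreover have "\<forall>i. - B \<le> w i"
    using B u0 unfolding w_def z_def by (smt (verit))
  ultimately obtain L where "w \<longlonglongrightarrow> L" using decseq_convergent by blast
  then have zL: "z \<longlonglongrightarrow> L" unfolding w_def by (rule LIMSEQ_offset)
  have "(\<lambda>j. z j + (\<Sum>k<j. c k)) \<longlonglongrightarrow> L + suminf c"
    by (intro tendsto_add zL summable_LIMSEQ[OF cs])
  then have "u \<longlonglongrightarrow> L + suminf c" unfolding z_def by simp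
  then show ?thesis unfolding convergent_def by blast
next
  case False
  then have inf: "\<And>N. \<exists>j\<ge>N. R j" by auto
  have "u \<longlonglongrightarrow> 0"
  proof (rule LIMSEQ_I)
    fix e :: real assume e: "0 < e"
    obtain N1 where N1: "\<forall>a\<ge>N1. \<forall>b. norm (sum c {a..<b}) < e / 2"
      using cs e unfolding summable_Cauchy by (meson half_gt_zero)
    obtain N2 where N2: "\<forall>j\<ge>N2. norm (r j - 0) < e / 2"
      using LIMSEQ_D[OF r0, of "e/2"] e by auto
    obtain \<rho> where \<rho>: "\<rho> \<ge> max N1 N2" "R \<rho>" using inf by blast
    have claim: "\<exists>l. max N1 N2 \<le> l \<and> l < n \<and> u n \<le> r l + sum c {Suc l..<n}" if "Suc \<rho> \<le> n" for n
      using that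
    proof (induction n rule: dec_induct)
      case base
      show ?case using \<rho> rs[of \<rho>] by (intro exI[of _ \<rho>]) auto
    next
      case (step n)
      show ?case
      proof (cases "R n")
        case True
        then show ?thesis using rs[of n] step(1) \<rho>(1) by (intro exI[of _ n]) auto
      next
        case False
        obtain l where l: "max N1 N2 \<le> l" "l < n" "u n \<le> r l + sum c {Suc l..<n}" using step(3) by blast
        have "u (Suc n) \<le> u n + c n" using ns[OF False] .
        also have "\<dots> \<le> r l + (sum c {Suc l..<n} + c n)" using l(3) by simp
        also have "sum c {Suc l..<n} + c n = sum c {Suc l..<Suc n}" using l(2) by simp
        finally show ?thesis using l by (intro exI[of _ l]) auto
      qed
    qed
    show "\<exists>no. \<forall>n\<ge>no. norm (u n - 0) < e"
    proof (intro exI allI impI)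
      fix n assume "Suc \<rho> \<le> n"
      then obtain l where l: "max N1 N2 \<le> l" "l < n" "u n \<le> r l + sum c {Suc l..<n}" using claim by blast
      have "\<bar>r l\<bar> < e / 2" using N2 l(1) by auto
      moreover have "\<bar>sum c {Suc l..<n}\<bar> < e / 2" using N1 l(1) by auto
      ultimately show "norm (u n - 0) < e" using l(3) u0[of n] by simp
    qed
  qed
  then show ?thesis unfolding convergent_def by blast
qed

lemma det_zero:
  fixes u c d g :: "nat \<Rightarrow> real" and R :: "nat \<Rightarrow> bool"
  assumes u0: "\<And>j. 0 \<le> u j" and uc: "convergent u" and cs: "summable c"
    and d0: "\<And>j. 0 \<le> d j" and dns: "\<not> summable d"
    and ns: "\<And>j. \<not> R j \<Longrightarrow> u (Suc j) \<le> u j - d j * g j + c j"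
    and pos: "\<And>a. a > 0 \<Longrightarrow> \<exists>\<delta>>0. \<forall>j. a \<le> u j \<longrightarrow> \<not> R j \<and> \<delta> \<le> g j"
  shows "u \<longlonglongrightarrow> 0"
proof -
  obtain L where L: "u \<longlonglongrightarrow> L" using uc unfolding convergent_def by blast
  have L0: "0 \<le> L" by (rule LIMSEQ_le_const[OF L]) (use u0 in auto)
  have "L = 0"
  proof (rule ccontr)
    assume "L \<noteq> 0"
    then have Lp: "L > 0" using L0 by simp
    obtain N where N: "\<forall>j\<ge>N. norm (u j - L) < L / 2" using LIMSEQ_D[OF L, of "L/2"] Lp by auto
    have uN: "L / 2 \<le> u j" if "j \<ge> N" for j
    proof -
      have "\<bar>u j - L\<bar> < L / 2" using N that by auto
      then show ?thesis by linarith
    qed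
    obtain \<delta> where \<delta>: "\<delta> > 0" "\<forall>j. L / 2 \<le> u j \<longrightarrow> \<not> R j \<and> \<delta> \<le> g j" using pos[of "L/2"] Lp by auto
    have st: "u (Suc j) \<le> u j - \<delta> * d j + c j" if "j \<ge> N" for j
    proof -
      have "\<not> R j" "\<delta> \<le> g j" using \<delta>(2) uN[OF that] by auto
      then have "d j * \<delta> \<le> d j * g j" using d0[of j] by (intro mult_left_mono) auto
      then have "\<delta> * d j \<le> d j * g j" by (simp add: mult.commute)
      then show ?thesis using ns[OF \<open>\<not> R j\<close>] by simp
    qed
    obtain B where B: "\<And>n. \<bar>\<Sum>k<n. c k\<bar> \<le> B" using psum_bound[OF cs] by blast
    have ind: "u (n + N) \<le> u N - \<delta> * sum d {N..<n + N} + sum c {N..<n + N}" for n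
    proof (induction n)
      case 0 then show ?case by simp
    next
      case (Suc n)
      have "u (Suc n + N) \<le> u (n + N) - \<delta> * d (n + N) + c (n + N)" using st[of "n + N"] by simp
      also have "\<dots> \<le> u N - \<delta> * sum d {N..<n + N} + sum c {N..<n + N} - \<delta> * d (n + N) + c (n + N)"
        using Suc by simp
      also have "\<dots> = u N - \<delta> * sum d {N..<Suc n + N} + sum c {N..<Suc n + N}"
        by (simp add: algebra_simps)
      finally show ?case .
    qed
    have cN: "sum c {N..<n + N} \<le> 2 * B" for n
    proof -
      have "sum c {..<N} + sum c {N..<n + N} = sum c {..<n + N}"
        by (metis add.commute le_add2 sum.atLeastLessThan_concat lessThan_atLeast0 zero_le)
      then show ?thesis using B[of N] B[of "n + N"] by linarith
    qed
    have dN: "sum d {N..<n + N} \<le> (u N + 2 * B) / \<delta>" for n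
    proof -
      have "\<delta> * sum d {N..<n + N} \<le> u N + 2 * B" using ind[of n] cN[of n] u0[of "n + N"] by linarith
      then show ?thesis using \<delta>(1) by (simp add: field_simps)
    qed
    have "summable d"
    proof (rule bounded_imp_summable[OF d0])
      fix n
      have "sum d {..n} \<le> sum d {..<Suc n + N}"
        by (rule sum_mono2) (use d0 in auto)
      also have "\<dots> = sum d {..<N} + sum d {N..<Suc n + N}"
        by (metis add.commute le_add2 sum.atLeastLessThan_concat lessThan_atLeast0 zero_le)
      also have "\<dots> \<le> sum d {..<N} + (u N + 2 * B) / \<delta>" using dN[of "Suc n"] by simp
      finally show "sum d {..n} \<le> sum d {..<N} + (u N + 2 * B) / \<delta>" .
    qed
    then show False using dns by simp
  qed
  then show ?thesis using L by simp
qed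



lemma path_main:
  fixes x mv ep :: "nat \<Rightarrow> real^'p" and \<beta> h :: "nat \<Rightarrow> real"
  assumes eq: "\<And>j. x (Suc j) = mv j + ep j"
    and bd: "\<And>j. x j \<noteq> 0 \<Longrightarrow> norm (mv j) \<le> \<beta> (Suc j) * norm (x j)"
    and \<beta>0: "\<And>n. 0 \<le> \<beta> n"
    and hdef: "\<And>j. x j \<noteq> 0 \<Longrightarrow> h j = (mv j /\<^sub>R (1 + (norm (x j))\<^sup>2)) \<bullet> ep j"
    and hs: "summable h" and es: "summable (\<lambda>j. (norm (ep j))\<^sup>2)"
    and A7: "(\<lambda>j. if x j = 0 then mv j else 0) \<longlonglongrightarrow> 0"
  shows "\<And>j. x j \<noteq> 0 \<Longrightarrow> ln (1 + (norm (x (Suc j)))\<^sup>2) \<le> ln (1 + (norm (x j))\<^sup>2)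
            + ((\<beta> (Suc j))\<^sup>2 - 1) * ((norm (x j))\<^sup>2 / (1 + (norm (x j))\<^sup>2)) + (2 * h j + (norm (ep j))\<^sup>2)"
    and "\<And>j. x j = 0 \<Longrightarrow> ln (1 + (norm (x (Suc j)))\<^sup>2) \<le> 2 * (norm (if x j = 0 then mv j else 0))\<^sup>2 + 2 * (norm (ep j))\<^sup>2"
    and "(\<lambda>j. 2 * (norm (if x j = 0 then mv j else 0))\<^sup>2 + 2 * (norm (ep j))\<^sup>2) \<longlonglongrightarrow> 0"
    and "summable (\<lambda>j. 2 * h j + (norm (ep j))\<^sup>2)"
proof -
  show "ln (1 + (norm (x (Suc j)))\<^sup>2) \<le> ln (1 + (norm (x j))\<^sup>2)
            + ((\<beta> (Suc j))\<^sup>2 - 1) * ((norm (x j))\<^sup>2 / (1 + (norm (x j))\<^sup>2)) + (2 * h j + (norm (ep j))\<^sup>2)"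
    if "x j \<noteq> 0" for j
    using step_ineq[OF eq bd[OF that] \<beta>0] hdef[OF that] by simp
  show "ln (1 + (norm (x (Suc j)))\<^sup>2) \<le> 2 * (norm (if x j = 0 then mv j else 0))\<^sup>2 + 2 * (norm (ep j))\<^sup>2"
    if "x j = 0" for j
    using reset_ineq[OF eq] that by simp
  have t1: "(\<lambda>j. (norm (if x j = 0 then mv j else 0))\<^sup>2) \<longlonglongrightarrow> (norm (0::real^'p))\<^sup>2"
    by (intro tendsto_intros A7)
  have t2: "(\<lambda>j. (norm (ep j))\<^sup>2) \<longlonglongrightarrow> 0" by (rule summable_LIMSEQ_zero[OF es])
  have "(\<lambda>j. 2 * (norm (if x j = 0 then mv j else 0))\<^sup>2 + 2 * (norm (ep j))\<^sup>2) \<longlonglongrightarrow> 2 * (norm (0::real^'p))\<^sup>2 + 2 * 0"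
    by (intro tendsto_add tendsto_mult_left t1 t2)
  then show "(\<lambda>j. 2 * (norm (if x j = 0 then mv j else 0))\<^sup>2 + 2 * (norm (ep j))\<^sup>2) \<longlonglongrightarrow> 0" by simp
  show "summable (\<lambda>j. 2 * h j + (norm (ep j))\<^sup>2)"
    by (intro summable_add summable_mult hs es)
qed

lemma u_facts:
  fixes x :: "nat \<Rightarrow> real^'p"
  shows "\<And>j. 0 \<le> ln (1 + (norm (x j))\<^sup>2)"
    and "\<And>j. 0 \<le> (norm (x j))\<^sup>2 / (1 + (norm (x j))\<^sup>2)"
    and "\<And>j. (norm (x j))\<^sup>2 / (1 + (norm (x j))\<^sup>2) \<le> 1"
    and "\<And>a. a > 0 \<Longrightarrow> \<exists>\<delta>>0. \<forall>j. a \<le> ln (1 + (norm (x j))\<^sup>2) \<longrightarrow> \<not> x j = 0 \<and> \<delta> \<le> (norm (x j))\<^sup>2 / (1 + (norm (x j))\<^sup>2)"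
    and "convergent (\<lambda>j. ln (1 + (norm (x j))\<^sup>2)) \<Longrightarrow> convergent (\<lambda>j. norm (x j))"
    and "(\<lambda>j. ln (1 + (norm (x j))\<^sup>2)) \<longlonglongrightarrow> 0 \<Longrightarrow> (\<lambda>j. norm (x j)) \<longlonglongrightarrow> 0"
proof -
  show "0 \<le> ln (1 + (norm (x j))\<^sup>2)" for j by simp
  show "0 \<le> (norm (x j))\<^sup>2 / (1 + (norm (x j))\<^sup>2)" for j by simp
  show "(norm (x j))\<^sup>2 / (1 + (norm (x j))\<^sup>2) \<le> 1" for j by (simp add: add_pos_nonneg)
  show "\<exists>\<delta>>0. \<forall>j. a \<le> ln (1 + (norm (x j))\<^sup>2) \<longrightarrow> \<not> x j = 0 \<and> \<delta> \<le> (norm (x j))\<^sup>2 / (1 + (norm (x j))\<^sup>2)"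
    if a: "a > 0" for a
  proof (intro exI conjI allI impI)
    show "0 < 1 - exp (- a)" using a by simp
    fix j assume le: "a \<le> ln (1 + (norm (x j))\<^sup>2)"
    show "\<not> x j = 0" using g_bound(1)[OF a _ le] by auto
    show "1 - exp (- a) \<le> (norm (x j))\<^sup>2 / (1 + (norm (x j))\<^sup>2)" using g_bound(2)[OF a _ le] by simp
  qed
  have nu: "(\<lambda>j. norm (x j)) = (\<lambda>j. sqrt (exp (ln (1 + (norm (x j))\<^sup>2)) - 1))"
    by (rule ext) (rule norm_from_u)
  show "convergent (\<lambda>j. norm (x j))" if cv: "convergent (\<lambda>j. ln (1 + (norm (x j))\<^sup>2))"
  proof -
    obtain L where L: "(\<lambda>j. ln (1 + (norm (x j))\<^sup>2)) \<longlonglongrightarrow> L" using cv unfolding convergent_def by blast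
    have "(\<lambda>j. sqrt (exp (ln (1 + (norm (x j))\<^sup>2)) - 1)) \<longlonglongrightarrow> sqrt (exp L - 1)"
      by (intro tendsto_intros L)
    then show ?thesis unfolding nu convergent_def by blast
  qed
  show "(\<lambda>j. norm (x j)) \<longlonglongrightarrow> 0" if L: "(\<lambda>j. ln (1 + (norm (x j))\<^sup>2)) \<longlonglongrightarrow> 0"
  proof -
    have "(\<lambda>j. sqrt (exp (ln (1 + (norm (x j))\<^sup>2)) - 1)) \<longlonglongrightarrow> sqrt (exp 0 - 1)"
      by (intro tendsto_intros L)
    then show ?thesis unfolding nu by simp
  qed
qed



theorem theorem6:
  fixes M :: "'a measure" and F :: "nat \<Rightarrow> 'a measure" and X :: "nat \<Rightarrow> 'a \<Rightarrow> real ^ 'p"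
  assumes "prob_space M"
    and "\<And>n. subalgebra M (F n)"
    and "\<And>m n. m \<le> n \<Longrightarrow> sets (F m) \<subseteq> sets (F n)"
    and "\<And>n. X n \<in> borel_measurable (F n)"
    and "\<And>n. integrable M (\<lambda>\<omega>. (norm (X n \<omega>))\<^sup>2)"
  shows "(A5 M F X \<and> A7 M F X \<and> A8 M F X \<longrightarrow> (AE \<omega> in M. convergent (\<lambda>n. norm (X n \<omega>))))
       \<and> (A6 M F X \<and> A7 M F X \<and> A8 M F X \<longrightarrow> (AE \<omega> in M. (\<lambda>n. norm (X n \<omega>)) \<longlonglongrightarrow> 0))"
proof -
  note P = assms(1) and sub = assms(2) and monoF = assms(3) and XF = assms(4) and Xsq = assms(5)
  define mv where "mv \<omega> j = vcond_exp M (F j) (X (Suc j)) \<omega>" for \<omega> j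
  define ep where "ep \<omega> j = resid M F X (Suc j) \<omega>" for \<omega> j
  have eq: "X (Suc j) \<omega> = mv \<omega> j + ep \<omega> j" for \<omega> j
    unfolding mv_def ep_def resid_def by simp
  have A7sh: "(\<lambda>j. if X j \<omega> = 0 then mv \<omega> j else 0) \<longlonglongrightarrow> 0"
    if "(\<lambda>n. if X (n - 1) \<omega> = 0 then vcond_exp M (F (n - 1)) (X n) \<omega> else 0) \<longlonglongrightarrow> 0" for \<omega>
    using LIMSEQ_Suc[OF that] unfolding mv_def diff_Suc_1 by simp
  have cfeq: "cf M F X \<beta> j \<omega> = mv \<omega> j /\<^sub>R (1 + (norm (X j \<omega>))\<^sup>2)"
    if "X j \<omega> \<noteq> 0" "norm (mv \<omega> j) \<le> \<beta> (Suc j) * norm (X j \<omega>)" for \<beta> j \<omega>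
    using that unfolding cf_def mv_def by simp
  have ratio: "norm (mv \<omega> j) \<le> b * norm (X j \<omega>)"
    if "X j \<omega> \<noteq> 0" "norm (vcond_exp M (F (Suc j - 1)) (X (Suc j)) \<omega>) / norm (X (Suc j - 1) \<omega>) \<le> b" for \<omega> j b
    using that unfolding mv_def by (simp add: pos_divide_le_eq)
  have pathw: "(\<forall>j. X j \<omega> \<noteq> 0 \<longrightarrow> ln (1 + (norm (X (Suc j) \<omega>))\<^sup>2) \<le> ln (1 + (norm (X j \<omega>))\<^sup>2)
            + ((\<beta> (Suc j))\<^sup>2 - 1) * ((norm (X j \<omega>))\<^sup>2 / (1 + (norm (X j \<omega>))\<^sup>2))
            + (2 * (cf M F X \<beta> j \<omega> \<bullet> resid M F X (Suc j) \<omega>) + (norm (resid M F X (Suc j) \<omega>))\<^sup>2))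
     \<and> (\<forall>j. X j \<omega> = 0 \<longrightarrow> ln (1 + (norm (X (Suc j) \<omega>))\<^sup>2) \<le> 2 * (norm (if X j \<omega> = 0 then mv \<omega> j else 0))\<^sup>2 + 2 * (norm (ep \<omega> j))\<^sup>2)
     \<and> (\<lambda>j. 2 * (norm (if X j \<omega> = 0 then mv \<omega> j else 0))\<^sup>2 + 2 * (norm (ep \<omega> j))\<^sup>2) \<longlonglongrightarrow> 0
     \<and> summable (\<lambda>j. 2 * (cf M F X \<beta> j \<omega> \<bullet> resid M F X (Suc j) \<omega>) + (norm (resid M F X (Suc j) \<omega>))\<^sup>2)"
    if bd: "\<And>j. X j \<omega> \<noteq> 0 \<Longrightarrow> norm (mv \<omega> j) \<le> \<beta> (Suc j) * norm (X j \<omega>)"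
      and \<beta>0: "\<And>n. 0 \<le> \<beta> n"
      and hs: "summable (\<lambda>j. cf M F X \<beta> j \<omega> \<bullet> resid M F X (Suc j) \<omega>)"
      and es: "summable (\<lambda>j. (norm (resid M F X (Suc j) \<omega>))\<^sup>2)"
      and a7: "(\<lambda>j. if X j \<omega> = 0 then mv \<omega> j else 0) \<longlonglongrightarrow> 0"
    for \<omega> \<beta>
  proof -
    have eq': "(\<lambda>j. X j \<omega>) (Suc j) = mv \<omega> j + ep \<omega> j" for j using eq by simp
    have bd': "(\<lambda>j. X j \<omega>) j \<noteq> 0 \<Longrightarrow> norm (mv \<omega> j) \<le> \<beta> (Suc j) * norm ((\<lambda>j. X j \<omega>) j)" for j
      using bd by simp
    have hdef: "(\<lambda>j. cf M F X \<beta> j \<omega> \<bullet> resid M F X (Suc j) \<omega>) j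
        = (mv \<omega> j /\<^sub>R (1 + (norm ((\<lambda>j. X j \<omega>) j))\<^sup>2)) \<bullet> ep \<omega> j" if nz: "(\<lambda>j. X j \<omega>) j \<noteq> 0" for j
    proof -
      have nz': "X j \<omega> \<noteq> 0" using nz by simp
      have "cf M F X \<beta> j \<omega> = mv \<omega> j /\<^sub>R (1 + (norm (X j \<omega>))\<^sup>2)" by (rule cfeq[where \<beta>=\<beta> and j=j and \<omega>=\<omega>, OF nz' bd[OF nz']])
      then show ?thesis unfolding ep_def by simp
    qed
    have es': "summable (\<lambda>j. (norm (ep \<omega> j))\<^sup>2)" using es unfolding ep_def .
    have a7': "(\<lambda>j. if (\<lambda>j. X j \<omega>) j = 0 then mv \<omega> j else 0) \<longlonglongrightarrow> 0" using a7 by simp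
    note pm = path_main[of "\<lambda>j. X j \<omega>" "mv \<omega>" "ep \<omega>" \<beta> "\<lambda>j. cf M F X \<beta> j \<omega> \<bullet> resid M F X (Suc j) \<omega>",
        OF eq' bd' \<beta>0 hdef hs es' a7']
    show ?thesis using pm unfolding ep_def by auto
  qed
  show ?thesis
  proof (intro conjI impI)
    assume H: "A5 M F X \<and> A7 M F X \<and> A8 M F X"
    from H obtain \<alpha> :: "nat \<Rightarrow> real" where \<alpha>0: "\<forall>n. \<alpha> n \<ge> 0" and \<alpha>s: "summable \<alpha>"
      and A5ae: "AE \<omega> in M. \<forall>n\<ge>1. X (n - 1) \<omega> \<noteq> 0 \<longrightarrow>
        norm (vcond_exp M (F (n - 1)) (X n) \<omega>) / norm (X (n - 1) \<omega>) \<le> 1 + \<alpha> n"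
      unfolding A5_def by blast
    from H obtain v :: "nat \<Rightarrow> real" where v0: "\<forall>n. v n \<ge> 0" and vs: "summable v"
      and A8ae: "AE \<omega> in M. \<forall>n\<ge>1. \<forall>t. cond_var M (F (n - 1)) (\<lambda>x. resid M F X n x $ t) \<omega> \<le> v n"
      unfolding A8_def by blast
    from H have A7ae: "AE \<omega> in M. (\<lambda>n. if X (n - 1) \<omega> = 0 then vcond_exp M (F (n - 1)) (X n) \<omega> else 0) \<longlonglongrightarrow> 0"
      unfolding A7_def by blast
    define \<beta> where "\<beta> n = 1 + \<alpha> n" for n
    have \<alpha>le: "\<alpha> n \<le> suminf \<alpha>" for n
      using sum_le_suminf[OF \<alpha>s, of "{n}"] \<alpha>0 by auto
    have \<beta>0: "0 \<le> \<beta> n" for n using \<alpha>0 unfolding \<beta>_def by (simp add: add_nonneg_nonneg)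
    have co: "AE \<omega> in M. summable (\<lambda>j. cf M F X \<beta> j \<omega> \<bullet> resid M F X (Suc j) \<omega>)
            \<and> summable (\<lambda>j. (norm (resid M F X (Suc j) \<omega>))\<^sup>2)"
      by (rule core[where \<beta>=\<beta> and Bc="1 + suminf \<alpha>" and v=v]) (use P sub monoF XF Xsq \<beta>0 \<alpha>le v0 vs A8ae in \<open>auto simp: \<beta>_def\<close>)
    have csumm: "summable (\<lambda>j. (\<beta> (Suc j))\<^sup>2 - 1)"
    proof -
      have e1: "(\<beta> (Suc j))\<^sup>2 - 1 = 2 * \<alpha> (Suc j) + \<alpha> (Suc j) * \<alpha> (Suc j)" for j
        by (simp add: \<beta>_def power2_eq_square algebra_simps)
      have s1: "summable (\<lambda>j. \<alpha> (Suc j))" using \<alpha>s by (simp add: summable_Suc_iff)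
      have s2: "summable (\<lambda>j. \<alpha> (Suc j) * \<alpha> (Suc j))"
      proof (rule summable_comparison_test[OF _ summable_mult[OF s1, of "suminf \<alpha>"]])
        show "\<exists>N. \<forall>n\<ge>N. norm (\<alpha> (Suc n) * \<alpha> (Suc n)) \<le> suminf \<alpha> * \<alpha> (Suc n)"
          using \<alpha>0 \<alpha>le by (auto intro!: exI[of _ 0] mult_right_mono)
      qed
      show ?thesis unfolding e1 by (intro summable_add summable_mult s1 s2)
    qed
    show "AE \<omega> in M. convergent (\<lambda>n. norm (X n \<omega>))"
      using co A5ae A7ae
    proof eventually_elim
      case (elim \<omega>)
      have bd: "norm (mv \<omega> j) \<le> \<beta> (Suc j) * norm (X j \<omega>)" if "X j \<omega> \<noteq> 0" for j
        using elim(2)[rule_format, of "Suc j"] that ratio[where \<omega>=\<omega> and j=j] unfolding \<beta>_def by simp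
      have hs: "summable (\<lambda>j. cf M F X \<beta> j \<omega> \<bullet> resid M F X (Suc j) \<omega>)" using elim(1) by blast
      have es: "summable (\<lambda>j. (norm (resid M F X (Suc j) \<omega>))\<^sup>2)" using elim(1) by blast
      note pw = pathw[OF bd \<beta>0 hs es A7sh[OF elim(3)]]
      define u where "u j = ln (1 + (norm (X j \<omega>))\<^sup>2)" for j
      have "convergent u"
      proof (rule det_conv[where R="\<lambda>j. X j \<omega> = 0"
            and c="\<lambda>j. ((\<beta> (Suc j))\<^sup>2 - 1) + (2 * (cf M F X \<beta> j \<omega> \<bullet> resid M F X (Suc j) \<omega>) + (norm (resid M F X (Suc j) \<omega>))\<^sup>2)"
            and r="\<lambda>j. 2 * (norm (if X j \<omega> = 0 then mv \<omega> j else 0))\<^sup>2 + 2 * (norm (ep \<omega> j))\<^sup>2"])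
        show "0 \<le> u j" for j by (simp add: u_def)
        show "summable (\<lambda>j. ((\<beta> (Suc j))\<^sup>2 - 1) + (2 * (cf M F X \<beta> j \<omega> \<bullet> resid M F X (Suc j) \<omega>) + (norm (resid M F X (Suc j) \<omega>))\<^sup>2))"
          by (rule summable_add[OF csumm]) (use pw in blast)
        show "(\<lambda>j. 2 * (norm (if X j \<omega> = 0 then mv \<omega> j else 0))\<^sup>2 + 2 * (norm (ep \<omega> j))\<^sup>2) \<longlonglongrightarrow> 0"
          using pw by blast
        show "u (Suc j) \<le> 2 * (norm (if X j \<omega> = 0 then mv \<omega> j else 0))\<^sup>2 + 2 * (norm (ep \<omega> j))\<^sup>2"
          if "X j \<omega> = 0" for j using pw that unfolding u_def by blast
        show "u (Suc j) \<le> u j + (((\<beta> (Suc j))\<^sup>2 - 1) + (2 * (cf M F X \<beta> j \<omega> \<bullet> resid M F X (Suc j) \<omega>) + (norm (resid M F X (Suc j) \<omega>))\<^sup>2))"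
          if nz: "\<not> X j \<omega> = 0" for j
        proof -
          have st: "u (Suc j) \<le> u j + ((\<beta> (Suc j))\<^sup>2 - 1) * ((norm (X j \<omega>))\<^sup>2 / (1 + (norm (X j \<omega>))\<^sup>2))
            + (2 * (cf M F X \<beta> j \<omega> \<bullet> resid M F X (Suc j) \<omega>) + (norm (resid M F X (Suc j) \<omega>))\<^sup>2)"
            using pw nz unfolding u_def by blast
          have b1: "0 \<le> (\<beta> (Suc j))\<^sup>2 - 1"
          proof -
            have "1 \<le> \<beta> (Suc j)" using \<alpha>0 unfolding \<beta>_def by simp
            then have "1\<^sup>2 \<le> (\<beta> (Suc j))\<^sup>2" by (rule power_mono) simp
            then show ?thesis by simp
          qed
          have "((\<beta> (Suc j))\<^sup>2 - 1) * ((norm (X j \<omega>))\<^sup>2 / (1 + (norm (X j \<omega>))\<^sup>2)) \<le> (\<beta> (Suc j))\<^sup>2 - 1"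
            by (rule mult_left_le[OF u_facts(3) b1])
          then show ?thesis using st by linarith
        qed
      qed
      moreover have "u = (\<lambda>j. ln (1 + (norm (X j \<omega>))\<^sup>2))" by (rule ext) (simp add: u_def)
      ultimately have "convergent (\<lambda>j. ln (1 + (norm (X j \<omega>))\<^sup>2))" by simp
      then show ?case using u_facts(5)[of "\<lambda>j. X j \<omega>"] by simp
    qed
  next
    assume H: "A6 M F X \<and> A7 M F X \<and> A8 M F X"
    from H obtain k :: "nat \<Rightarrow> real" where k01: "\<forall>n. 0 < k n \<and> k n \<le> 1" and kns: "\<not> summable (\<lambda>n. 1 - k n)"
      and A6ae: "AE \<omega> in M. \<forall>n\<ge>1. X (n - 1) \<omega> \<noteq> 0 \<longrightarrow>
        norm (vcond_exp M (F (n - 1)) (X n) \<omega>) / norm (X (n - 1) \<omega>) \<le> k n"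
      unfolding A6_def by blast
    from H obtain v :: "nat \<Rightarrow> real" where v0: "\<forall>n. v n \<ge> 0" and vs: "summable v"
      and A8ae: "AE \<omega> in M. \<forall>n\<ge>1. \<forall>t. cond_var M (F (n - 1)) (\<lambda>x. resid M F X n x $ t) \<omega> \<le> v n"
      unfolding A8_def by blast
    from H have A7ae: "AE \<omega> in M. (\<lambda>n. if X (n - 1) \<omega> = 0 then vcond_exp M (F (n - 1)) (X n) \<omega> else 0) \<longlonglongrightarrow> 0"
      unfolding A7_def by blast
    have k0: "0 \<le> k n" for n using k01 by (simp add: less_imp_le)
    have co: "AE \<omega> in M. summable (\<lambda>j. cf M F X k j \<omega> \<bullet> resid M F X (Suc j) \<omega>)
            \<and> summable (\<lambda>j. (norm (resid M F X (Suc j) \<omega>))\<^sup>2)"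
      by (rule core[where \<beta>=k and Bc=1 and v=v]) (use P sub monoF XF Xsq k0 k01 v0 vs A8ae in auto)
    have dns: "\<not> summable (\<lambda>j. 1 - k (Suc j))" using kns summable_Suc_iff[of "\<lambda>n. 1 - k n"] by simp
    show "AE \<omega> in M. (\<lambda>n. norm (X n \<omega>)) \<longlonglongrightarrow> 0"
      using co A6ae A7ae
    proof eventually_elim
      case (elim \<omega>)
      have bd: "norm (mv \<omega> j) \<le> k (Suc j) * norm (X j \<omega>)" if "X j \<omega> \<noteq> 0" for j
        using elim(2)[rule_format, of "Suc j"] that ratio[where \<omega>=\<omega> and j=j] by simp
      have hs: "summable (\<lambda>j. cf M F X k j \<omega> \<bullet> resid M F X (Suc j) \<omega>)" using elim(1) by blast
      have es: "summable (\<lambda>j. (norm (resid M F X (Suc j) \<omega>))\<^sup>2)" using elim(1) by blast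
      note pw = pathw[OF bd k0 hs es A7sh[OF elim(3)]]
      define u where "u j = ln (1 + (norm (X j \<omega>))\<^sup>2)" for j
      define g where "g j = (norm (X j \<omega>))\<^sup>2 / (1 + (norm (X j \<omega>))\<^sup>2)" for j
      define c where "c j = 2 * (cf M F X k j \<omega> \<bullet> resid M F X (Suc j) \<omega>) + (norm (resid M F X (Suc j) \<omega>))\<^sup>2" for j
      have cs: "summable c" unfolding c_def using pw by blast
      have g0: "0 \<le> g j" for j unfolding g_def by simp
      have stp: "u (Suc j) \<le> u j - (1 - k (Suc j)) * g j + c j" if nz: "\<not> X j \<omega> = 0" for j
      proof -
        have st: "u (Suc j) \<le> u j + ((k (Suc j))\<^sup>2 - 1) * g j + c j"
          using pw nz unfolding u_def g_def c_def by blast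
        have "(k (Suc j))\<^sup>2 \<le> k (Suc j)"
          using k01 by (simp add: power2_eq_square mult_left_le)
        then have "((k (Suc j))\<^sup>2 - 1) * g j \<le> - (1 - k (Suc j)) * g j"
          by (intro mult_right_mono g0) simp
        moreover have "- (1 - k (Suc j)) * g j = - ((1 - k (Suc j)) * g j)" by (simp add: algebra_simps)
        ultimately show ?thesis using st by linarith
      qed
      have "convergent u"
      proof (rule det_conv[where R="\<lambda>j. X j \<omega> = 0" and c=c
            and r="\<lambda>j. 2 * (norm (if X j \<omega> = 0 then mv \<omega> j else 0))\<^sup>2 + 2 * (norm (ep \<omega> j))\<^sup>2"])
        show "0 \<le> u j" for j by (simp add: u_def)
        show "summable c" by (rule cs)
        show "(\<lambda>j. 2 * (norm (if X j \<omega> = 0 then mv \<omega> j else 0))\<^sup>2 + 2 * (norm (ep \<omega> j))\<^sup>2) \<longlonglongrightarrow> 0"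
          using pw by blast
        show "u (Suc j) \<le> 2 * (norm (if X j \<omega> = 0 then mv \<omega> j else 0))\<^sup>2 + 2 * (norm (ep \<omega> j))\<^sup>2"
          if "X j \<omega> = 0" for j using pw that unfolding u_def by blast
        show "u (Suc j) \<le> u j + c j" if nz: "\<not> X j \<omega> = 0" for j
        proof -
          have "0 \<le> (1 - k (Suc j)) * g j" using k01 g0 by simp
          then show ?thesis using stp[OF nz] by linarith
        qed
      qed
      have "u \<longlonglongrightarrow> 0"
      proof (rule det_zero[where R="\<lambda>j. X j \<omega> = 0" and c=c and d="\<lambda>j. 1 - k (Suc j)" and g=g])
        show "0 \<le> u j" for j by (simp add: u_def)
        show "convergent u" by fact
        show "summable c" by (rule cs)
        show "0 \<le> 1 - k (Suc j)" for j using k01 by simp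
        show "\<not> summable (\<lambda>j. 1 - k (Suc j))" by (rule dns)
        show "u (Suc j) \<le> u j - (1 - k (Suc j)) * g j + c j" if "\<not> X j \<omega> = 0" for j by (rule stp[OF that])
        show "\<exists>\<delta>>0. \<forall>j. a \<le> u j \<longrightarrow> \<not> X j \<omega> = 0 \<and> \<delta> \<le> g j" if "a > 0" for a
          using u_facts(4)[OF that, of "\<lambda>j. X j \<omega>"] unfolding u_def g_def by simp
      qed
      moreover have "u = (\<lambda>j. ln (1 + (norm (X j \<omega>))\<^sup>2))" by (rule ext) (simp add: u_def)
      ultimately have "(\<lambda>j. ln (1 + (norm (X j \<omega>))\<^sup>2)) \<longlonglongrightarrow> 0" by simp
      then show ?case using u_facts(6)[of "\<lambda>j. X j \<omega>"] by simp
    qed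
  qed
qed


end
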